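(* Let $\mathcal{H}\subseteq\mathcal{F}$ be saturated fusion systems over a finite $p$-group $S$, let $\mathcal{C}$ be a family of subgroups of $S$ closed under $\mathcal{F}$-conjugation and taking overgroups, let $P\in\mathcal{C}$ be fully $\mathcal{F}$-normalized, and put $\mathcal{F}_1=\mathcal{H}$, $\mathcal{F}_2=N_{\mathcal{F}}(P)$, $\mathcal{F}_e=N_{\mathcal{H}}(P)$, $S'=N_S(P)$ and $\Lambda=\{\mathcal{F}_1,\mathcal{F}_2,\mathcal{F}_e\}$. Assume that $\mathcal{F}=\langle\mathcal{H},\operatorname{Aut}_{\mathcal{F}}(P)\rangle_S$. Then $\operatorname{Rep}_{\mathcal{F}}(Q,\Lambda)$ is a tree for every $Q\le S$ that is not $\mathcal{F}$-conjugate to a proper subgroup of $P$. In particular $C_\Lambda(Q):=H_1(\operatorname{Rep}_{\mathcal{F}}(Q,\Lambda);\mathcal{R})=0$ for every such $Q$ and every commutative ring $\mathcal{R}$, and if $P$ is minimal under inclusion in $\mathcal{C}$ then the functor $C_\Lambda$ on $\mathcal{O}_{\mathcal{C}}(\mathcal{F})$ is zero.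
   Context: $\langle\ldots\rangle_S$ is the smallest fusion system over $S$ containing the listed data. $N_{\mathcal{F}}(P)$ is the fusion system over $N_S(P)$ with morphisms those $\mathcal{F}$-morphisms $\varphi:A\to B$ extending to $\hat\varphi:AP\to BP$ in $\mathcal{F}$ with $\hat\varphi(P)=P$. For a fusion system $\mathcal{E}$ over $S_{\mathcal{E}}$, $\operatorname{Rep}_{\mathcal{F}}(Q,\mathcal{E})=\operatorname{Hom}_{\mathcal{F}}(Q,S_{\mathcal{E}})/\sim$ with $\varphi\sim\psi$ iff $\theta\varphi=\psi$ for an $\mathcal{E}$-isomorphism $\theta:\varphi(Q)\to\psi(Q)$. $\operatorname{Rep}_{\mathcal{F}}(Q,\Lambda)$ is the bipartite graph with vertices $\operatorname{Rep}_{\mathcal{F}}(Q,\mathcal{F}_1)\sqcup\operatorname{Rep}_{\mathcal{F}}(Q,\mathcal{F}_2)$ and edges $\operatorname{Rep}_{\mathcal{F}}(Q,\mathcal{F}_e)$, the edge $[\varphi]_{\mathcal{F}_e}$ joining $[\varphi]_{\mathcal{F}_2}$ and $[\iota_{S'}^S\varphi]_{\mathcal{F}_1}$; $Q\mapsto H_1(\operatorname{Rep}_{\mathcal{F}}(Q,\Lambda);\mathcal{R})$ is a functor on $\mathcal{O}_{\mathcal{C}}(\mathcal{F})^{op}$ via precomposition. *)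

theory Defs
  imports "HOL-Algebra.Algebra"
begin

text \<open>Morphisms of a fusion system are triples (A, B, phi): an injective group
homomorphism phi : A -> B between subgroups A, B of the ambient finite group,
phi extensional on A.\<close>

type_synonym 'a fmor = "'a set \<times> 'a set \<times> ('a \<Rightarrow> 'a)"

definition inj_hom :: "('a, 'b) monoid_scheme \<Rightarrow> 'a set \<Rightarrow> 'a set \<Rightarrow> ('a \<Rightarrow> 'a) set" where
  "inj_hom G A B = {\<phi>. \<phi> \<in> hom (G\<lparr>carrier := A\<rparr>) (G\<lparr>carrier := B\<rparr>) \<and> inj_on \<phi> A \<and> \<phi> \<in> extensional A}"

definition conjm :: "('a, 'b) monoid_scheme \<Rightarrow> 'a \<Rightarrow> 'a \<Rightarrow> 'a" where
  "conjm G g x = g \<otimes>\<^bsub>G\<^esub> x \<otimes>\<^bsub>G\<^esub> inv\<^bsub>G\<^esub> g"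

definition is_subgroup_of :: "('a, 'b) monoid_scheme \<Rightarrow> 'a set \<Rightarrow> 'a set \<Rightarrow> bool" where
  "is_subgroup_of G T A \<longleftrightarrow> subgroup A G \<and> A \<subseteq> T"

definition fusion_system :: "('a, 'b) monoid_scheme \<Rightarrow> 'a set \<Rightarrow> 'a fmor set \<Rightarrow> bool" where
  "fusion_system G T F \<longleftrightarrow> subgroup T G \<and>
     (\<forall>(A, B, \<phi>) \<in> F. is_subgroup_of G T A \<and> is_subgroup_of G T B \<and> \<phi> \<in> inj_hom G A B) \<and>
     (\<forall>A B g. is_subgroup_of G T A \<and> is_subgroup_of G T B \<and> g \<in> T \<and> conjm G g ` A \<subseteq> B
          \<longrightarrow> (A, B, restrict (conjm G g) A) \<in> F) \<and>
     (\<forall>A B C \<phi> \<psi>. (A, B, \<phi>) \<in> F \<and> (B, C, \<psi>) \<in> F \<longrightarrow> (A, C, restrict (\<psi> \<circ> \<phi>) A) \<in> F) \<and>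
     (\<forall>A B \<phi>. (A, B, \<phi>) \<in> F \<longrightarrow>
          (A, \<phi> ` A, \<phi>) \<in> F \<and> (\<phi> ` A, A, restrict (inv_into A \<phi>) (\<phi> ` A)) \<in> F)"

definition Hom_F :: "'a fmor set \<Rightarrow> 'a set \<Rightarrow> 'a set \<Rightarrow> ('a \<Rightarrow> 'a) set" where
  "Hom_F F A B = {\<phi>. (A, B, \<phi>) \<in> F}"

definition Aut_F :: "'a fmor set \<Rightarrow> 'a set \<Rightarrow> ('a \<Rightarrow> 'a) set" where
  "Aut_F F A = Hom_F F A A"

definition normalizer_in :: "('a, 'b) monoid_scheme \<Rightarrow> 'a set \<Rightarrow> 'a set \<Rightarrow> 'a set" where
  "normalizer_in G T A = {g \<in> T. conjm G g ` A = A}"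

definition centralizer_in :: "('a, 'b) monoid_scheme \<Rightarrow> 'a set \<Rightarrow> 'a set \<Rightarrow> 'a set" where
  "centralizer_in G T A = {g \<in> T. \<forall>a \<in> A. g \<otimes>\<^bsub>G\<^esub> a = a \<otimes>\<^bsub>G\<^esub> g}"

definition Aut_in :: "('a, 'b) monoid_scheme \<Rightarrow> 'a set \<Rightarrow> 'a set \<Rightarrow> ('a \<Rightarrow> 'a) set" where
  "Aut_in G T A = {restrict (conjm G g) A | g. g \<in> normalizer_in G T A}"

definition F_conjugate :: "'a fmor set \<Rightarrow> 'a set \<Rightarrow> 'a set \<Rightarrow> bool" where
  "F_conjugate F A B \<longleftrightarrow> (\<exists>\<phi>. (A, B, \<phi>) \<in> F \<and> \<phi> ` A = B)"

definition fully_normalized :: "('a, 'b) monoid_scheme \<Rightarrow> 'a set \<Rightarrow> 'a fmor set \<Rightarrow> 'a set \<Rightarrow> bool" where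
  "fully_normalized G T F A \<longleftrightarrow> is_subgroup_of G T A \<and>
     (\<forall>B. F_conjugate F A B \<longrightarrow> card (normalizer_in G T B) \<le> card (normalizer_in G T A))"

definition fully_centralized :: "('a, 'b) monoid_scheme \<Rightarrow> 'a set \<Rightarrow> 'a fmor set \<Rightarrow> 'a set \<Rightarrow> bool" where
  "fully_centralized G T F A \<longleftrightarrow> is_subgroup_of G T A \<and>
     (\<forall>B. F_conjugate F A B \<longrightarrow> card (centralizer_in G T B) \<le> card (centralizer_in G T A))"

definition N_phi :: "('a, 'b) monoid_scheme \<Rightarrow> 'a set \<Rightarrow> 'a set \<Rightarrow> ('a \<Rightarrow> 'a) \<Rightarrow> 'a set" where
  "N_phi G T A \<phi> = {g \<in> normalizer_in G T A. \<exists>h \<in> normalizer_in G T (\<phi> ` A).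
        \<forall>a \<in> A. \<phi> (conjm G g a) = conjm G h (\<phi> a)}"

text \<open>Saturated fusion system over the finite p-group T (Broto-Levi-Oliver / Roberts-Shpectorov axioms).
Sylow axiom: Aut_T(A) is a Sylow p-subgroup of Aut_F(A), i.e. its index is prime to p.\<close>
definition saturated :: "('a, 'b) monoid_scheme \<Rightarrow> 'a set \<Rightarrow> nat \<Rightarrow> 'a fmor set \<Rightarrow> bool" where
  "saturated G T p F \<longleftrightarrow> fusion_system G T F \<and>
     (\<forall>A. fully_normalized G T F A \<longrightarrow>
          fully_centralized G T F A \<and>
          (\<exists>m. card (Aut_F F A) = card (Aut_in G T A) * m \<and> \<not> p dvd m)) \<and>
     (\<forall>A \<phi>. (A, T, \<phi>) \<in> F \<and> fully_centralized G T F (\<phi> ` A) \<longrightarrow>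
          (\<exists>\<psi>. (N_phi G T A \<phi>, T, \<psi>) \<in> F \<and> (\<forall>a \<in> A. \<psi> a = \<phi> a)))"

definition generated_fs :: "('a, 'b) monoid_scheme \<Rightarrow> 'a set \<Rightarrow> 'a fmor set \<Rightarrow> 'a fmor set" where
  "generated_fs G T Xs = {f. \<forall>F. fusion_system G T F \<and> Xs \<subseteq> F \<longrightarrow> f \<in> F}"

definition normalizer_fs :: "('a, 'b) monoid_scheme \<Rightarrow> 'a set \<Rightarrow> 'a fmor set \<Rightarrow> 'a set \<Rightarrow> 'a fmor set" where
  "normalizer_fs G T F P = {(A, B, \<phi>). A \<subseteq> normalizer_in G T P \<and> B \<subseteq> normalizer_in G T P \<and>
      (A, B, \<phi>) \<in> F \<and>
      (\<exists>\<psi>. (set_mult G A P, set_mult G B P, \<psi>) \<in> F \<and> (\<forall>a \<in> A. \<psi> a = \<phi> a) \<and> \<psi> ` P = P)}"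

text \<open>Rep_F(Q, E) for a fusion system E over SE: classes of Hom_F(Q, SE) modulo
post-composition with E-isomorphisms.\<close>
definition rep_class :: "'a fmor set \<Rightarrow> 'a set \<Rightarrow> 'a fmor set \<Rightarrow> 'a set \<Rightarrow> ('a \<Rightarrow> 'a) \<Rightarrow> ('a \<Rightarrow> 'a) set" where
  "rep_class F SE E Q \<phi> = {\<psi> \<in> Hom_F F Q SE. \<exists>\<theta>. (\<phi> ` Q, \<psi> ` Q, \<theta>) \<in> E \<and> \<theta> ` (\<phi> ` Q) = \<psi> ` Q \<and>
        (\<forall>x \<in> Q. \<theta> (\<phi> x) = \<psi> x)}"

definition Rep :: "'a fmor set \<Rightarrow> 'a set \<Rightarrow> 'a fmor set \<Rightarrow> 'a set \<Rightarrow> ('a \<Rightarrow> 'a) set set" where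
  "Rep F SE E Q = rep_class F SE E Q ` Hom_F F Q SE"

text \<open>Finite multigraphs given by a vertex set, an edge set and an endpoint map.\<close>
definition mg_connected :: "'v set \<Rightarrow> 'e set \<Rightarrow> ('e \<Rightarrow> 'v \<times> 'v) \<Rightarrow> bool" where
  "mg_connected V E ends \<longleftrightarrow> V \<noteq> {} \<and>
     (\<forall>u \<in> V. \<forall>v \<in> V. (u, v) \<in> {(x, y). \<exists>e \<in> E. ends e = (x, y) \<or> ends e = (y, x)}\<^sup>*)"

definition mg_acyclic :: "'v set \<Rightarrow> 'e set \<Rightarrow> ('e \<Rightarrow> 'v \<times> 'v) \<Rightarrow> bool" where
  "mg_acyclic V E ends \<longleftrightarrow> \<not> (\<exists>es vs. es \<noteq> [] \<and> length vs = length es \<and> distinct es \<and> distinct vs \<and>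
      set es \<subseteq> E \<and> set vs \<subseteq> V \<and>
      (\<forall>i < length es. ends (es ! i) = (vs ! i, vs ! ((i + 1) mod length es)) \<or>
                       ends (es ! i) = (vs ! ((i + 1) mod length es), vs ! i)))"

definition mg_tree :: "'v set \<Rightarrow> 'e set \<Rightarrow> ('e \<Rightarrow> 'v \<times> 'v) \<Rightarrow> bool" where
  "mg_tree V E ends \<longleftrightarrow> mg_connected V E ends \<and> mg_acyclic V E ends"

text \<open>First homology H_1(Gamma; R) of a graph = kernel of the boundary map
R^E -> R^V (chains are functions on edges vanishing off E; edges oriented by ends).\<close>
definition mg_H1 :: "'v set \<Rightarrow> 'e set \<Rightarrow> ('e \<Rightarrow> 'v \<times> 'v) \<Rightarrow> ('e \<Rightarrow> 'r::comm_ring_1) set" where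
  "mg_H1 V E ends = {c. (\<forall>e. e \<notin> E \<longrightarrow> c e = 0) \<and>
      (\<forall>v \<in> V. (\<Sum>e \<in> {e \<in> E. snd (ends e) = v}. c e) - (\<Sum>e \<in> {e \<in> E. fst (ends e) = v}. c e) = 0)}"

text \<open>The graph Rep_F(Q, Lambda) for Lambda = {F1 over S1, F2 over S2, Fe over Se}, Se \<subseteq> S1, S2:
vertices Rep(Q,F1) + Rep(Q,F2); the edge [phi]_Fe joins [iota phi]_F1 and [phi]_F2.\<close>
definition RepL_V :: "'a fmor set \<Rightarrow> 'a set \<Rightarrow> 'a fmor set \<Rightarrow> 'a set \<Rightarrow> 'a fmor set \<Rightarrow> 'a set
     \<Rightarrow> (('a \<Rightarrow> 'a) set + ('a \<Rightarrow> 'a) set) set" where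
  "RepL_V F S1 F1 S2 F2 Q = Inl ` Rep F S1 F1 Q \<union> Inr ` Rep F S2 F2 Q"

definition RepL_E :: "'a fmor set \<Rightarrow> 'a set \<Rightarrow> 'a fmor set \<Rightarrow> 'a set \<Rightarrow> ('a \<Rightarrow> 'a) set set" where
  "RepL_E F Se Fe Q = Rep F Se Fe Q"

definition RepL_ends :: "'a fmor set \<Rightarrow> 'a set \<Rightarrow> 'a fmor set \<Rightarrow> 'a set \<Rightarrow> 'a fmor set \<Rightarrow> 'a set
     \<Rightarrow> ('a \<Rightarrow> 'a) set \<Rightarrow> (('a \<Rightarrow> 'a) set + ('a \<Rightarrow> 'a) set) \<times> (('a \<Rightarrow> 'a) set + ('a \<Rightarrow> 'a) set)" where
  "RepL_ends F S1 F1 S2 F2 Q e = (let \<phi> = (SOME \<phi>. \<phi> \<in> e) in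
      (Inl (rep_class F S1 F1 Q \<phi>), Inr (rep_class F S2 F2 Q \<phi>)))"

end

theory Submission
  imports Defs
begin


locale fus =
  fixes G :: "('a,'b) monoid_scheme" and T :: "'a set" and F :: "'a fmor set"
  assumes grp: "group G" and fin: "finite (carrier G)" and fs: "fusion_system G T F"
begin

sublocale group G by (rule grp)

lemma T_sub: "subgroup T G" using fs unfolding fusion_system_def by blast

lemma memF: assumes "(A,B,\<phi>) \<in> F"
  shows "subgroup A G" "A \<subseteq> T" "subgroup B G" "B \<subseteq> T" "\<phi> ` A \<subseteq> B" "inj_on \<phi> A"
    "\<phi> \<in> extensional A" "\<And>x y. x \<in> A \<Longrightarrow> y \<in> A \<Longrightarrow> \<phi> (x \<otimes>\<^bsub>G\<^esub> y) = \<phi> x \<otimes>\<^bsub>G\<^esub> \<phi> y"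
proof -
  have h: "is_subgroup_of G T A \<and> is_subgroup_of G T B \<and> \<phi> \<in> inj_hom G A B"
    using fs assms unfolding fusion_system_def by fast
  then show "subgroup A G" "A \<subseteq> T" "subgroup B G" "B \<subseteq> T" "inj_on \<phi> A" "\<phi> \<in> extensional A"
    by (auto simp: is_subgroup_of_def inj_hom_def)
  have hh: "\<phi> \<in> hom (G\<lparr>carrier := A\<rparr>) (G\<lparr>carrier := B\<rparr>)" using h by (simp add: inj_hom_def)
  then show "\<phi> ` A \<subseteq> B" by (auto simp: hom_def)
  show "\<And>x y. x \<in> A \<Longrightarrow> y \<in> A \<Longrightarrow> \<phi> (x \<otimes>\<^bsub>G\<^esub> y) = \<phi> x \<otimes>\<^bsub>G\<^esub> \<phi> y"
    using hh by (auto simp: hom_def)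
qed

lemma memF_raw: "(A,B,\<phi>) \<in> F \<Longrightarrow> is_subgroup_of G T A \<and> is_subgroup_of G T B \<and> \<phi> \<in> inj_hom G A B"
  using fs unfolding fusion_system_def by fast

lemma conjF: assumes "subgroup A G" "A \<subseteq> T" "subgroup B G" "B \<subseteq> T" "g \<in> T" "conjm G g ` A \<subseteq> B"
  shows "(A, B, restrict (conjm G g) A) \<in> F"
  using fs assms unfolding fusion_system_def is_subgroup_of_def by blast

lemma compF: "(A,B,\<phi>) \<in> F \<Longrightarrow> (B,C,\<psi>) \<in> F \<Longrightarrow> (A, C, restrict (\<psi> \<circ> \<phi>) A) \<in> F"
  using fs unfolding fusion_system_def by blast

lemma imgF: "(A,B,\<phi>) \<in> F \<Longrightarrow> (A, \<phi> ` A, \<phi>) \<in> F"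
  using fs unfolding fusion_system_def by blast

lemma invF: "(A,B,\<phi>) \<in> F \<Longrightarrow> (\<phi> ` A, A, restrict (inv_into A \<phi>) (\<phi> ` A)) \<in> F"
  using fs unfolding fusion_system_def by blast

lemma finA: "subgroup A G \<Longrightarrow> finite A"
  using fin subgroup.subset finite_subset by blast

lemma idF: assumes "subgroup A G" "A \<subseteq> B" "subgroup B G" "B \<subseteq> T"
  shows "(A, B, restrict (\<lambda>x. x) A) \<in> F"
proof -
  have one: "\<one>\<^bsub>G\<^esub> \<in> T" using T_sub subgroup.one_closed by blast
  have e: "restrict (conjm G \<one>\<^bsub>G\<^esub>) A = restrict (\<lambda>x. x) A"
    using assms(1) by (auto simp: conjm_def restrict_def subgroup.mem_carrier)
  have "conjm G \<one>\<^bsub>G\<^esub> ` A \<subseteq> B" using assms grp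
    by (auto simp: conjm_def subgroup.mem_carrier)
  then show ?thesis using conjF[OF assms(1) _ assms(3,4) one] assms e by auto
qed

lemma restr_eq: "\<phi> \<in> extensional A \<Longrightarrow> restrict \<phi> A = \<phi>"
  by (simp add: extensional_restrict)

lemma enlargeF: assumes "(A,B,\<phi>) \<in> F" "B \<subseteq> B'" "subgroup B' G" "B' \<subseteq> T"
  shows "(A,B',\<phi>) \<in> F"
proof -
  have "(B,B',restrict (\<lambda>x. x) B) \<in> F" using idF memF[OF assms(1)] assms by blast
  from compF[OF assms(1) this] have "(A, B', restrict (restrict (\<lambda>x. x) B \<circ> \<phi>) A) \<in> F" .
  moreover have "restrict (restrict (\<lambda>x. x) B \<circ> \<phi>) A = \<phi>"
    using memF[OF assms(1)] by (auto simp: restrict_def extensional_def fun_eq_iff)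
  ultimately show ?thesis by simp
qed

lemma codF: assumes "(A,B,\<phi>) \<in> F" "\<phi> ` A \<subseteq> B'" "subgroup B' G" "B' \<subseteq> T"
  shows "(A,B',\<phi>) \<in> F"
  using enlargeF[OF imgF[OF assms(1)] assms(2-4)] .

lemma restrF: assumes "(A,B,\<phi>) \<in> F" "subgroup A' G" "A' \<subseteq> A"
  shows "(A', B, restrict \<phi> A') \<in> F"
proof -
  have "(A',A,restrict (\<lambda>x. x) A') \<in> F" using idF memF[OF assms(1)] assms by blast
  from compF[OF this assms(1)] show ?thesis
    by (auto simp: restrict_def fun_eq_iff cong: if_cong)
qed

lemma img_sub: "(A,B,\<phi>) \<in> F \<Longrightarrow> subgroup (\<phi> ` A) G \<and> \<phi> ` A \<subseteq> T"
  using memF(3,4)[OF imgF] by blast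

lemma card_img: "(A,B,\<phi>) \<in> F \<Longrightarrow> card (\<phi> ` A) = card A"
  using memF(6) card_image by blast

lemma auto_img: assumes "(A,A,\<phi>) \<in> F" shows "\<phi> ` A = A"
  using card_img[OF assms] memF(5)[OF assms] finA[OF memF(1)[OF assms]]
  by (simp add: card_subset_eq)

lemma Fconj_refl: "subgroup A G \<Longrightarrow> A \<subseteq> T \<Longrightarrow> F_conjugate F A A"
  unfolding F_conjugate_def using idF[of A A] by (intro exI[of _ "restrict (\<lambda>x. x) A"]) auto

lemma Fconj_trans: "F_conjugate F A B \<Longrightarrow> F_conjugate F B C \<Longrightarrow> F_conjugate F A C"
  unfolding F_conjugate_def
proof (elim exE conjE)
  fix \<phi> \<psi> assume a: "(A,B,\<phi>) \<in> F" "\<phi> ` A = B" "(B,C,\<psi>) \<in> F" "\<psi> ` B = C"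
  show "\<exists>\<chi>. (A, C, \<chi>) \<in> F \<and> \<chi> ` A = C"
    using compF[OF a(1,3)] a(2,4) by (intro exI[of _ "restrict (\<psi> \<circ> \<phi>) A"]) (auto simp: image_comp)
qed

lemma Fconj_sym: "F_conjugate F A B \<Longrightarrow> F_conjugate F B A"
  unfolding F_conjugate_def
proof (elim exE conjE)
  fix \<phi> assume a: "(A,B,\<phi>) \<in> F" "\<phi> ` A = B"
  show "\<exists>\<chi>. (B, A, \<chi>) \<in> F \<and> \<chi> ` B = A"
    using invF[OF a(1)] a(2) memF(6)[OF a(1)]
    by (intro exI[of _ "restrict (inv_into A \<phi>) (\<phi> ` A)"]) auto
qed

lemma Fconj_card: "F_conjugate F A B \<Longrightarrow> card A = card B"
  unfolding F_conjugate_def using card_img by metis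

lemma Fconj_sub: "F_conjugate F A B \<Longrightarrow> subgroup A G \<and> A \<subseteq> T \<and> subgroup B G \<and> B \<subseteq> T"
  unfolding F_conjugate_def using memF by blast

end

locale fus2 = Fs: fus G T F + Hs: fus G T H
  for G :: "('a,'b) monoid_scheme" and T :: "'a set" and F H :: "'a fmor set" +
  fixes P :: "'a set"
  assumes HF: "H \<subseteq> F" and P_sub: "subgroup P G" "P \<subseteq> T"
    and gen: "F = generated_fs G T (H \<union> {(P, P, \<alpha>) | \<alpha>. \<alpha> \<in> Aut_F F P})"
begin

definition small :: "'a set \<Rightarrow> bool" where
  "small A \<longleftrightarrow> (\<exists>R. R \<subseteq> P \<and> F_conjugate F A R)"

lemma small_pull: assumes "(A,B,\<phi>) \<in> F" "small B" shows "small A"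
proof -
  obtain R k where R: "R \<subseteq> P" "(B,R,k) \<in> F" "k ` B = R"
    using assms(2) unfolding small_def F_conjugate_def by blast
  have c: "(A, R, restrict (k \<circ> \<phi>) A) \<in> F" using Fs.compF[OF assms(1) R(2)] .
  have "(A, (restrict (k \<circ> \<phi>) A) ` A, restrict (k \<circ> \<phi>) A) \<in> F" using Fs.imgF[OF c] .
  moreover have "(restrict (k \<circ> \<phi>) A) ` A \<subseteq> P" using Fs.memF(5)[OF c] R(1) by blast
  ultimately show ?thesis unfolding small_def F_conjugate_def by blast
qed

lemma small_push: assumes "(A,B,\<phi>) \<in> F" "small A" shows "small (\<phi> ` A)"
  using small_pull[OF Fs.invF[OF assms(1)] assms(2)] .

lemma H_pres: assumes "(A,B,\<phi>) \<in> H" "subgroup A' G" "A' \<subseteq> A"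
  shows "F_conjugate H A' P \<longleftrightarrow> F_conjugate H (\<phi> ` A') P"
proof -
  have r: "(A', B, restrict \<phi> A') \<in> H" using Hs.restrF[OF assms] .
  have "(A', (restrict \<phi> A') ` A', restrict \<phi> A') \<in> H" using Hs.imgF[OF r] .
  moreover have "(restrict \<phi> A') ` A' = \<phi> ` A'" by auto
  ultimately have "F_conjugate H A' (\<phi> ` A')" unfolding F_conjugate_def by auto
  then show ?thesis using Hs.Fconj_trans Hs.Fconj_sym by blast
qed

definition Fp :: "'a fmor set" where
  "Fp = {(A,B,\<phi>). (A,B,\<phi>) \<in> F \<and> (\<not> small A \<longrightarrow> (A,B,\<phi>) \<in> H) \<and>
     (\<forall>A'. subgroup A' G \<longrightarrow> A' \<subseteq> A \<longrightarrow> (F_conjugate H A' P \<longleftrightarrow> F_conjugate H (\<phi> ` A') P))}"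

lemma H_Fp: assumes "(A,B,\<phi>) \<in> H" shows "(A,B,\<phi>) \<in> Fp"
proof -
  have "(A,B,\<phi>) \<in> F" using assms HF by blast
  moreover have "\<forall>A'. subgroup A' G \<longrightarrow> A' \<subseteq> A \<longrightarrow> (F_conjugate H A' P \<longleftrightarrow> F_conjugate H (\<phi> ` A') P)"
    using H_pres[OF assms] by blast
  ultimately show ?thesis unfolding Fp_def using assms by simp
qed

lemma restr_img: assumes "(A,B,\<phi>) \<in> F" "subgroup A' G" "A' \<subseteq> A"
  shows "subgroup (\<phi> ` A') G" "\<phi> ` A' \<subseteq> B"
proof -
  have r: "(A', B, restrict \<phi> A') \<in> F" using Fs.restrF[OF assms] .
  have "(restrict \<phi> A') ` A' = \<phi> ` A'" by auto
  then show "subgroup (\<phi> ` A') G" using Fs.img_sub[OF r] by metis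
  show "\<phi> ` A' \<subseteq> B" using Fs.memF(5)[OF assms(1)] assms(3) by blast
qed

lemma fs_Fp: "fusion_system G T Fp"
  unfolding fusion_system_def
proof (intro conjI)
  show "subgroup T G" using Fs.T_sub .
  show "\<forall>(A, B, \<phi>)\<in>Fp. is_subgroup_of G T A \<and> is_subgroup_of G T B \<and> \<phi> \<in> inj_hom G A B"
  proof clarify
    fix A B \<phi> assume "(A,B,\<phi>) \<in> Fp"
    then have "(A,B,\<phi>) \<in> F" unfolding Fp_def by simp
    then show "is_subgroup_of G T A \<and> is_subgroup_of G T B \<and> \<phi> \<in> inj_hom G A B" by (rule Fs.memF_raw)
  qed
  show "\<forall>A B g. is_subgroup_of G T A \<and> is_subgroup_of G T B \<and> g \<in> T \<and> conjm G g ` A \<subseteq> B \<longrightarrow>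
      (A, B, restrict (conjm G g) A) \<in> Fp"
  proof (intro allI impI, elim conjE)
    fix A B g assume "is_subgroup_of G T A" "is_subgroup_of G T B" "g \<in> T" "conjm G g ` A \<subseteq> B"
    then show "(A, B, restrict (conjm G g) A) \<in> Fp"
      by (intro H_Fp Hs.conjF) (auto simp: is_subgroup_of_def)
  qed
  show "\<forall>A B C \<phi> \<psi>. (A, B, \<phi>) \<in> Fp \<and> (B, C, \<psi>) \<in> Fp \<longrightarrow> (A, C, restrict (\<psi> \<circ> \<phi>) A) \<in> Fp"
  proof (intro allI impI, elim conjE)
    fix A B C \<phi> \<psi> assume a: "(A, B, \<phi>) \<in> Fp" "(B, C, \<psi>) \<in> Fp"
    have aF: "(A,B,\<phi>) \<in> F" "(B,C,\<psi>) \<in> F" using a unfolding Fp_def by auto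
    have c1: "(A, C, restrict (\<psi> \<circ> \<phi>) A) \<in> F" using Fs.compF[OF aF] .
    have c2: "\<not> small A \<longrightarrow> (A, C, restrict (\<psi> \<circ> \<phi>) A) \<in> H"
    proof
      assume ns: "\<not> small A"
      then have "\<not> small B" using small_pull[OF aF(1)] by blast
      then have "(A,B,\<phi>) \<in> H" "(B,C,\<psi>) \<in> H" using a ns unfolding Fp_def by auto
      then show "(A, C, restrict (\<psi> \<circ> \<phi>) A) \<in> H" using Hs.compF by blast
    qed
    have c3: "\<forall>A'. subgroup A' G \<longrightarrow> A' \<subseteq> A \<longrightarrow>
        (F_conjugate H A' P \<longleftrightarrow> F_conjugate H (restrict (\<psi> \<circ> \<phi>) A ` A') P)"
    proof (intro allI impI)
      fix A' assume s: "subgroup A' G" "A' \<subseteq> A"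
      have e1: "F_conjugate H A' P \<longleftrightarrow> F_conjugate H (\<phi> ` A') P" using a(1) s unfolding Fp_def by auto
      have e2: "F_conjugate H (\<phi> ` A') P \<longleftrightarrow> F_conjugate H (\<psi> ` \<phi> ` A') P"
        using a(2) restr_img[OF aF(1) s] unfolding Fp_def by auto
      have "restrict (\<psi> \<circ> \<phi>) A ` A' = \<psi> ` \<phi> ` A'" using s(2) by auto
      then show "F_conjugate H A' P \<longleftrightarrow> F_conjugate H (restrict (\<psi> \<circ> \<phi>) A ` A') P" using e1 e2 by simp
    qed
    show "(A, C, restrict (\<psi> \<circ> \<phi>) A) \<in> Fp" unfolding Fp_def using c1 c2 c3 by blast
  qed
  show "\<forall>A B \<phi>. (A, B, \<phi>) \<in> Fp \<longrightarrow> (A, \<phi> ` A, \<phi>) \<in> Fp \<and>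
      (\<phi> ` A, A, restrict (inv_into A \<phi>) (\<phi> ` A)) \<in> Fp"
  proof (intro allI impI conjI)
    fix A B \<phi> assume a: "(A, B, \<phi>) \<in> Fp"
    have aF: "(A,B,\<phi>) \<in> F" using a unfolding Fp_def by auto
    show "(A, \<phi> ` A, \<phi>) \<in> Fp" using a Fs.imgF[OF aF] Hs.imgF unfolding Fp_def by auto
    let ?i = "restrict (inv_into A \<phi>) (\<phi> ` A)"
    have iF: "(\<phi> ` A, A, ?i) \<in> F" using Fs.invF[OF aF] .
    have inj: "inj_on \<phi> A" using Fs.memF(6)[OF aF] .
    have c2: "\<not> small (\<phi> ` A) \<longrightarrow> (\<phi> ` A, A, ?i) \<in> H"
    proof
      assume "\<not> small (\<phi> ` A)"
      then have "\<not> small A" using small_push[OF aF] by blast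
      then have "(A,B,\<phi>) \<in> H" using a unfolding Fp_def by auto
      then show "(\<phi> ` A, A, ?i) \<in> H" using Hs.invF by blast
    qed
    have c3: "\<forall>B'. subgroup B' G \<longrightarrow> B' \<subseteq> \<phi> ` A \<longrightarrow>
        (F_conjugate H B' P \<longleftrightarrow> F_conjugate H (?i ` B') P)"
    proof (intro allI impI)
      fix B' assume s: "subgroup B' G" "B' \<subseteq> \<phi> ` A"
      have s2: "subgroup (?i ` B') G" "?i ` B' \<subseteq> A" using restr_img[OF iF s] by auto
      have "\<phi> ` (?i ` B') = B'"
      proof -
        have "?i ` B' = inv_into A \<phi> ` B'" using s(2) by (intro image_cong) auto
        then have "\<phi> ` (?i ` B') = (\<lambda>y. \<phi> (inv_into A \<phi> y)) ` B'" by (simp add: image_image)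
        also have "\<dots> = (\<lambda>y. y) ` B'"
          using s(2) f_inv_into_f[of _ \<phi> A] by (intro image_cong) auto
        also have "\<dots> = B'" by simp
        finally show ?thesis .
      qed
      then show "F_conjugate H B' P \<longleftrightarrow> F_conjugate H (?i ` B') P"
        using a s2 unfolding Fp_def by auto
    qed
    show "(\<phi> ` A, A, ?i) \<in> Fp" unfolding Fp_def using iF c2 c3 by blast
  qed
qed

lemma gens_Fp: "H \<union> {(P, P, \<alpha>) | \<alpha>. \<alpha> \<in> Aut_F F P} \<subseteq> Fp"
proof
  fix x assume "x \<in> H \<union> {(P, P, \<alpha>) | \<alpha>. \<alpha> \<in> Aut_F F P}"
  then consider "x \<in> H" | \<alpha> where "x = (P,P,\<alpha>)" "(P,P,\<alpha>) \<in> F"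
    unfolding Aut_F_def Hom_F_def by blast
  then show "x \<in> Fp"
  proof cases
    case 1 then show ?thesis using H_Fp by (cases x) auto
  next
    case 2
    have sm: "small P" unfolding small_def using Fs.Fconj_refl P_sub by blast
    have c3: "F_conjugate H A' P \<longleftrightarrow> F_conjugate H (\<alpha> ` A') P" if s: "subgroup A' G" "A' \<subseteq> P" for A'
    proof (cases "A' = P")
      case True then show ?thesis using Fs.auto_img[OF 2(2)] by simp
    next
      case False
      have fP: "finite P" using Fs.finA P_sub by blast
      have lt: "card A' < card P" using False s(2) fP by (meson psubsetI psubset_card_mono)
      have "card (\<alpha> ` A') = card A'"
        using Fs.memF(6)[OF 2(2)] s(2) by (meson card_image inj_on_subset)
      then show ?thesis using lt Hs.Fconj_card by (metis less_irrefl)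
    qed
    show ?thesis unfolding Fp_def 2(1) using 2(2) sm c3 by blast
  qed
qed

lemma F_Fp: "F \<subseteq> Fp"
proof
  fix x assume "x \<in> F"
  then have "x \<in> generated_fs G T (H \<union> {(P, P, \<alpha>) | \<alpha>. \<alpha> \<in> Aut_F F P})" using gen by simp
  then show "x \<in> Fp" unfolding generated_fs_def using fs_Fp gens_Fp by blast
qed

lemma S1: "(A,B,\<phi>) \<in> F \<Longrightarrow> \<not> small A \<Longrightarrow> (A,B,\<phi>) \<in> H"
  using F_Fp unfolding Fp_def by blast

lemma S2: assumes "(A,B,\<phi>) \<in> F" shows "F_conjugate H A P \<longleftrightarrow> F_conjugate H (\<phi> ` A) P"
  using F_Fp assms Fs.memF(1)[OF assms] unfolding Fp_def by blast

lemma S3: assumes "F_conjugate F A P" shows "F_conjugate H A P"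
proof -
  obtain \<phi> where "(A,P,\<phi>) \<in> F" "\<phi> ` A = P" using assms unfolding F_conjugate_def by blast
  then show ?thesis using S2 Hs.Fconj_refl P_sub by metis
qed

end



context fus begin

lemma conj_mult: "g \<in> carrier G \<Longrightarrow> h \<in> carrier G \<Longrightarrow> x \<in> carrier G \<Longrightarrow>
   conjm G (g \<otimes>\<^bsub>G\<^esub> h) x = conjm G g (conjm G h x)"
  by (simp add: conjm_def m_assoc inv_mult_group)

lemma conj_inv: "g \<in> carrier G \<Longrightarrow> x \<in> carrier G \<Longrightarrow> conjm G (inv\<^bsub>G\<^esub> g) (conjm G g x) = x"
proof -
  assume g: "g \<in> carrier G" and x: "x \<in> carrier G"
  have "conjm G (inv\<^bsub>G\<^esub> g) (conjm G g x) = (inv\<^bsub>G\<^esub> g \<otimes>\<^bsub>G\<^esub> g) \<otimes>\<^bsub>G\<^esub> x \<otimes>\<^bsub>G\<^esub> (inv\<^bsub>G\<^esub> g \<otimes>\<^bsub>G\<^esub> g)"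
    unfolding conjm_def using g x by (simp only: inv_inv m_assoc inv_closed m_closed)
  then show ?thesis using g x by simp
qed

lemma cancel1: "b \<in> carrier G \<Longrightarrow> z \<in> carrier G \<Longrightarrow> b \<otimes>\<^bsub>G\<^esub> (inv\<^bsub>G\<^esub> b \<otimes>\<^bsub>G\<^esub> z) = z"
  by (simp add: m_assoc[symmetric])

lemma cancel2: "b \<in> carrier G \<Longrightarrow> z \<in> carrier G \<Longrightarrow> inv\<^bsub>G\<^esub> b \<otimes>\<^bsub>G\<^esub> (b \<otimes>\<^bsub>G\<^esub> z) = z"
  by (simp add: m_assoc[symmetric])

lemma conj_closed: "g \<in> carrier G \<Longrightarrow> x \<in> carrier G \<Longrightarrow> conjm G g x \<in> carrier G"
  by (simp add: conjm_def)

end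

locale fusP = fus +
  fixes P :: "'a set"
  assumes P_sg: "subgroup P G" and P_T: "P \<subseteq> T"
begin

abbreviation "N \<equiv> normalizer_in G T P"

lemma P_car: "P \<subseteq> carrier G" using subgroup.subset[OF P_sg] by blast
lemma T_car: "T \<subseteq> carrier G" using subgroup.subset[OF T_sub] by blast

lemma N_T: "N \<subseteq> T" unfolding normalizer_in_def by blast

lemma N_inv_conj: assumes "g \<in> N" "p \<in> P" shows "conjm G (inv\<^bsub>G\<^esub> g) p \<in> P"
proof -
  have g: "g \<in> carrier G" using assms(1) N_T T_car by blast
  have "p \<in> conjm G g ` P" using assms unfolding normalizer_in_def by blast
  then obtain q where q: "q \<in> P" "p = conjm G g q" by blast
  then show ?thesis using conj_inv[OF g] P_car by auto
qed

lemma N_sg: "subgroup N G"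
proof (rule subgroupI)
  show "N \<subseteq> carrier G" using N_T T_car by blast
  show "N \<noteq> {}"
  proof -
    have "conjm G \<one>\<^bsub>G\<^esub> ` P = P" using P_car by (auto simp: conjm_def image_iff subset_iff)
    then have "\<one>\<^bsub>G\<^esub> \<in> N" unfolding normalizer_in_def using subgroup.one_closed[OF T_sub] by blast
    then show ?thesis by blast
  qed
next
  fix a assume a: "a \<in> N"
  have ag: "a \<in> carrier G" using a N_T T_car by blast
  have "inv\<^bsub>G\<^esub> a \<in> T" using a N_T subgroup.m_inv_closed[OF T_sub] by blast
  moreover have "conjm G (inv\<^bsub>G\<^esub> a) ` P = P"
  proof
    show "conjm G (inv\<^bsub>G\<^esub> a) ` P \<subseteq> P" using N_inv_conj a by blast
    show "P \<subseteq> conjm G (inv\<^bsub>G\<^esub> a) ` P"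
    proof
      fix p assume p: "p \<in> P"
      have "conjm G a p \<in> P" using a p unfolding normalizer_in_def by blast
      moreover have "conjm G (inv\<^bsub>G\<^esub> a) (conjm G a p) = p" using conj_inv ag p P_car by blast
      ultimately show "p \<in> conjm G (inv\<^bsub>G\<^esub> a) ` P" by (metis image_eqI)
    qed
  qed
  ultimately show "inv\<^bsub>G\<^esub> a \<in> N" unfolding normalizer_in_def by blast
next
  fix a b assume a: "a \<in> N" and b: "b \<in> N"
  have ag: "a \<in> carrier G" and bg: "b \<in> carrier G" using a b N_T T_car by blast+
  have "a \<otimes>\<^bsub>G\<^esub> b \<in> T" using a b N_T subgroup.m_closed[OF T_sub] by blast
  moreover have "conjm G (a \<otimes>\<^bsub>G\<^esub> b) ` P = P"
  proof -
    have "conjm G (a \<otimes>\<^bsub>G\<^esub> b) ` P = conjm G a ` (conjm G b ` P)"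
      using conj_mult[OF ag bg] P_car by (auto simp: image_iff subset_iff)
    then show ?thesis using a b unfolding normalizer_in_def by simp
  qed
  ultimately show "a \<otimes>\<^bsub>G\<^esub> b \<in> N" unfolding normalizer_in_def by blast
qed

lemma P_N: "P \<subseteq> N"
proof
  fix p assume p: "p \<in> P"
  have pg: "p \<in> carrier G" using p P_car by blast
  have "conjm G p ` P = P"
  proof
    show "conjm G p ` P \<subseteq> P" using p P_sg by (auto simp: conjm_def subgroup.m_closed[OF P_sg] subgroup.m_inv_closed[OF P_sg])
    show "P \<subseteq> conjm G p ` P"
    proof
      fix q assume q: "q \<in> P"
      have "conjm G (inv\<^bsub>G\<^esub> p) q \<in> P" using p q P_sg by (auto simp: conjm_def subgroup.m_closed[OF P_sg] subgroup.m_inv_closed[OF P_sg])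
      moreover have "conjm G p (conjm G (inv\<^bsub>G\<^esub> p) q) = q"
        using conj_inv[of "inv\<^bsub>G\<^esub> p" q] pg q P_car by auto
      ultimately show "q \<in> conjm G p ` P" by (metis image_eqI)
    qed
  qed
  then show "p \<in> N" unfolding normalizer_in_def using p P_T by blast
qed

lemma AP_mem: "x \<in> A <#>\<^bsub>G\<^esub> P \<longleftrightarrow> (\<exists>a\<in>A. \<exists>p\<in>P. x = a \<otimes>\<^bsub>G\<^esub> p)"
  unfolding set_mult_def by blast

lemma AP_sg: assumes A: "subgroup A G" "A \<subseteq> N"
  shows "subgroup (A <#>\<^bsub>G\<^esub> P) G" "A <#>\<^bsub>G\<^esub> P \<subseteq> T" "P \<subseteq> A <#>\<^bsub>G\<^esub> P" "A \<subseteq> A <#>\<^bsub>G\<^esub> P"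
proof -
  have Ac: "A \<subseteq> carrier G" using subgroup.subset[OF A(1)] by blast
  show "P \<subseteq> A <#>\<^bsub>G\<^esub> P"
  proof
    fix p assume p: "p \<in> P"
    have "\<one>\<^bsub>G\<^esub> \<in> A" using subgroup.one_closed[OF A(1)] by blast
    moreover have "p = \<one>\<^bsub>G\<^esub> \<otimes>\<^bsub>G\<^esub> p" using p P_car by auto
    ultimately show "p \<in> A <#>\<^bsub>G\<^esub> P" unfolding AP_mem using p by blast
  qed
  show "A \<subseteq> A <#>\<^bsub>G\<^esub> P"
  proof
    fix a assume a: "a \<in> A"
    have "\<one>\<^bsub>G\<^esub> \<in> P" using subgroup.one_closed[OF P_sg] by blast
    moreover have "a = a \<otimes>\<^bsub>G\<^esub> \<one>\<^bsub>G\<^esub>" using a Ac by auto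
    ultimately show "a \<in> A <#>\<^bsub>G\<^esub> P" unfolding AP_mem using a by blast
  qed
  show "A <#>\<^bsub>G\<^esub> P \<subseteq> T"
  proof
    fix x assume "x \<in> A <#>\<^bsub>G\<^esub> P"
    then obtain a p where "a \<in> A" "p \<in> P" "x = a \<otimes>\<^bsub>G\<^esub> p" unfolding AP_mem by blast
    moreover have "a \<in> T" "p \<in> T" using calculation A(2) N_T P_T by blast+
    ultimately show "x \<in> T" using subgroup.m_closed[OF T_sub] by metis
  qed
  show "subgroup (A <#>\<^bsub>G\<^esub> P) G"
  proof (rule subgroupI)
    show "A <#>\<^bsub>G\<^esub> P \<subseteq> carrier G" using \<open>A <#>\<^bsub>G\<^esub> P \<subseteq> T\<close> T_car by blast
    show "A <#>\<^bsub>G\<^esub> P \<noteq> {}" using \<open>P \<subseteq> A <#>\<^bsub>G\<^esub> P\<close> subgroup.one_closed[OF P_sg] by blast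
  next
    fix x assume "x \<in> A <#>\<^bsub>G\<^esub> P"
    then obtain a p where ap: "a \<in> A" "p \<in> P" "x = a \<otimes>\<^bsub>G\<^esub> p" unfolding AP_mem by blast
    have ag: "a \<in> carrier G" and pg: "p \<in> carrier G" using ap Ac P_car by blast+
    have "inv\<^bsub>G\<^esub> x = inv\<^bsub>G\<^esub> a \<otimes>\<^bsub>G\<^esub> conjm G a (inv\<^bsub>G\<^esub> p)"
      using ag pg ap(3) by (simp add: conjm_def inv_mult_group m_assoc[symmetric])
    moreover have "inv\<^bsub>G\<^esub> a \<in> A" using ap subgroup.m_inv_closed[OF A(1)] by blast
    moreover have "conjm G a (inv\<^bsub>G\<^esub> p) \<in> P"
      using ap A(2) subgroup.m_inv_closed[OF P_sg] unfolding normalizer_in_def by blast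
    ultimately show "inv\<^bsub>G\<^esub> x \<in> A <#>\<^bsub>G\<^esub> P" unfolding AP_mem by blast
  next
    fix x y assume "x \<in> A <#>\<^bsub>G\<^esub> P" "y \<in> A <#>\<^bsub>G\<^esub> P"
    then obtain a p b q where ap: "a \<in> A" "p \<in> P" "x = a \<otimes>\<^bsub>G\<^esub> p"
      and bq: "b \<in> A" "q \<in> P" "y = b \<otimes>\<^bsub>G\<^esub> q" unfolding AP_mem by blast
    have g: "a \<in> carrier G" "p \<in> carrier G" "b \<in> carrier G" "q \<in> carrier G" using ap bq Ac P_car by blast+
    have "x \<otimes>\<^bsub>G\<^esub> y = (a \<otimes>\<^bsub>G\<^esub> b) \<otimes>\<^bsub>G\<^esub> (conjm G (inv\<^bsub>G\<^esub> b) p \<otimes>\<^bsub>G\<^esub> q)"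
      using g ap(3) bq(3) by (simp add: conjm_def m_assoc cancel1)
    moreover have "a \<otimes>\<^bsub>G\<^esub> b \<in> A" using ap bq subgroup.m_closed[OF A(1)] by blast
    moreover have "conjm G (inv\<^bsub>G\<^esub> b) p \<otimes>\<^bsub>G\<^esub> q \<in> P"
      using N_inv_conj bq A(2) ap subgroup.m_closed[OF P_sg] by blast
    ultimately show "x \<otimes>\<^bsub>G\<^esub> y \<in> A <#>\<^bsub>G\<^esub> P" unfolding AP_mem by blast
  qed
qed

lemma PP: "P <#>\<^bsub>G\<^esub> P = P"
proof
  show "P <#>\<^bsub>G\<^esub> P \<subseteq> P"
  proof
    fix x assume "x \<in> P <#>\<^bsub>G\<^esub> P"
    then obtain a p where "a \<in> P" "p \<in> P" "x = a \<otimes>\<^bsub>G\<^esub> p" unfolding AP_mem by blast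
    then show "x \<in> P" using subgroup.m_closed[OF P_sg] by metis
  qed
  show "P \<subseteq> P <#>\<^bsub>G\<^esub> P" using AP_sg(3)[OF P_sg P_N] .
qed

end



lemma NFS_mono: "F \<subseteq> F' \<Longrightarrow> normalizer_fs G T F P \<subseteq> normalizer_fs G T F' P"
  unfolding normalizer_fs_def by blast

definition eqv_ok :: "'a fmor set \<Rightarrow> bool" where
  "eqv_ok E \<longleftrightarrow> (\<forall>A B C \<theta>1 \<theta>2. (A,B,\<theta>1) \<in> E \<longrightarrow> (B,C,\<theta>2) \<in> E \<longrightarrow> (A,C,restrict (\<theta>2 \<circ> \<theta>1) A) \<in> E) \<and>
     (\<forall>A B \<theta>. (A,B,\<theta>) \<in> E \<longrightarrow> \<theta> ` A = B \<longrightarrow> (B,A,restrict (inv_into A \<theta>) B) \<in> E \<and> inj_on \<theta> A)"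

lemma rc_mem: "\<psi> \<in> rep_class F SE E Q \<phi> \<longleftrightarrow> \<psi> \<in> Hom_F F Q SE \<and> (\<exists>\<theta>. (\<phi> ` Q, \<psi> ` Q, \<theta>) \<in> E \<and> \<theta> ` (\<phi> ` Q) = \<psi> ` Q \<and>
        (\<forall>x \<in> Q. \<theta> (\<phi> x) = \<psi> x))"
  unfolding rep_class_def by blast

lemma rc_trans: assumes "eqv_ok E" "\<psi> \<in> rep_class F SE E Q \<phi>" "\<chi> \<in> rep_class F SE E Q \<psi>"
  shows "\<chi> \<in> rep_class F SE E Q \<phi>"
proof -
  obtain \<theta>1 where t1: "(\<phi> ` Q, \<psi> ` Q, \<theta>1) \<in> E" "\<theta>1 ` (\<phi> ` Q) = \<psi> ` Q" "\<forall>x \<in> Q. \<theta>1 (\<phi> x) = \<psi> x"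
    using assms(2) unfolding rc_mem by blast
  obtain \<theta>2 where t2: "(\<psi> ` Q, \<chi> ` Q, \<theta>2) \<in> E" "\<theta>2 ` (\<psi> ` Q) = \<chi> ` Q" "\<forall>x \<in> Q. \<theta>2 (\<psi> x) = \<chi> x"
    and h: "\<chi> \<in> Hom_F F Q SE"
    using assms(3) unfolding rc_mem by blast
  have c: "(\<phi> ` Q, \<chi> ` Q, restrict (\<theta>2 \<circ> \<theta>1) (\<phi> ` Q)) \<in> E"
    using assms(1) t1(1) t2(1) unfolding eqv_ok_def by blast
  have i: "restrict (\<theta>2 \<circ> \<theta>1) (\<phi> ` Q) ` (\<phi> ` Q) = \<chi> ` Q"
  proof -
    have "restrict (\<theta>2 \<circ> \<theta>1) (\<phi> ` Q) ` (\<phi> ` Q) = \<theta>2 ` (\<theta>1 ` (\<phi> ` Q))" by (simp add: image_image)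
    then show ?thesis using t1(2) t2(2) by simp
  qed
  have p: "\<forall>x \<in> Q. restrict (\<theta>2 \<circ> \<theta>1) (\<phi> ` Q) (\<phi> x) = \<chi> x" using t1(3) t2(3) by simp
  show ?thesis unfolding rc_mem using h c i p by blast
qed

lemma rc_sym: assumes "eqv_ok E" "\<psi> \<in> rep_class F SE E Q \<phi>" "\<phi> \<in> Hom_F F Q SE"
  shows "\<phi> \<in> rep_class F SE E Q \<psi>"
proof -
  obtain \<theta> where t: "(\<phi> ` Q, \<psi> ` Q, \<theta>) \<in> E" "\<theta> ` (\<phi> ` Q) = \<psi> ` Q" "\<forall>x \<in> Q. \<theta> (\<phi> x) = \<psi> x"
    using assms(2) unfolding rc_mem by blast
  have c: "(\<psi> ` Q, \<phi> ` Q, restrict (inv_into (\<phi> ` Q) \<theta>) (\<psi> ` Q)) \<in> E" and inj: "inj_on \<theta> (\<phi> ` Q)"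
    using assms(1) t(1,2) unfolding eqv_ok_def by metis+
  have p: "\<forall>x \<in> Q. restrict (inv_into (\<phi> ` Q) \<theta>) (\<psi> ` Q) (\<psi> x) = \<phi> x"
  proof
    fix x assume x: "x \<in> Q"
    have "inv_into (\<phi> ` Q) \<theta> (\<psi> x) = \<phi> x" using t(3) x inj by (metis imageI inv_into_f_f)
    then show "restrict (inv_into (\<phi> ` Q) \<theta>) (\<psi> ` Q) (\<psi> x) = \<phi> x" using x by simp
  qed
  have i: "restrict (inv_into (\<phi> ` Q) \<theta>) (\<psi> ` Q) ` (\<psi> ` Q) = \<phi> ` Q"
  proof -
    have "restrict (inv_into (\<phi> ` Q) \<theta>) (\<psi> ` Q) ` (\<psi> ` Q) = (\<lambda>x. restrict (inv_into (\<phi> ` Q) \<theta>) (\<psi> ` Q) (\<psi> x)) ` Q"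
      by (simp add: image_comp)
    also have "\<dots> = \<phi> ` Q" using p by (intro image_cong) auto
    finally show ?thesis .
  qed
  show ?thesis unfolding rc_mem using assms(3) c i p by blast
qed

lemma rc_refl: assumes "(\<phi> ` Q, \<phi> ` Q, \<theta>) \<in> E" "\<forall>y\<in>\<phi> ` Q. \<theta> y = y" "\<phi> \<in> Hom_F F Q SE"
  shows "\<phi> \<in> rep_class F SE E Q \<phi>"
proof -
  have im: "\<theta> ` (\<phi> ` Q) = \<phi> ` Q" using assms(2) by (metis image_cong image_ident)
  have "\<forall>x \<in> Q. \<theta> (\<phi> x) = \<phi> x" using assms(2) by blast
  then show ?thesis unfolding rc_mem using assms(1,3) im by blast
qed

lemma rc_eq: assumes "eqv_ok E" "\<psi> \<in> rep_class F SE E Q \<phi>" "\<phi> \<in> Hom_F F Q SE"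
  shows "rep_class F SE E Q \<psi> = rep_class F SE E Q \<phi>"
proof
  show "rep_class F SE E Q \<psi> \<subseteq> rep_class F SE E Q \<phi>" using rc_trans[OF assms(1,2)] by blast
  have "\<phi> \<in> rep_class F SE E Q \<psi>" using rc_sym[OF assms] .
  then show "rep_class F SE E Q \<phi> \<subseteq> rep_class F SE E Q \<psi>" using rc_trans[OF assms(1)] by blast
qed

context fus begin

lemma eqv_F: "eqv_ok F"
  unfolding eqv_ok_def using compF invF memF(6) by metis

end

context fusP begin

abbreviation "NFS \<equiv> normalizer_fs G T F P"

lemma NFS_D: assumes "(A,B,\<theta>) \<in> NFS"
  shows "(A,B,\<theta>) \<in> F" "A \<subseteq> N" "B \<subseteq> N"
    "\<exists>\<psi>. (A <#>\<^bsub>G\<^esub> P, B <#>\<^bsub>G\<^esub> P, \<psi>) \<in> F \<and> (\<forall>a \<in> A. \<psi> a = \<theta> a) \<and> \<psi> ` P = P"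
  using assms unfolding normalizer_fs_def by blast+

lemma NFS_I: assumes "(A,B,\<theta>) \<in> F" "A \<subseteq> N" "B \<subseteq> N"
    "(A <#>\<^bsub>G\<^esub> P, B <#>\<^bsub>G\<^esub> P, \<psi>) \<in> F" "\<forall>a \<in> A. \<psi> a = \<theta> a" "\<psi> ` P = P"
  shows "(A,B,\<theta>) \<in> NFS"
  using assms unfolding normalizer_fs_def by blast

lemma NFS_comp: assumes "(A,B,\<theta>1) \<in> NFS" "(B,C,\<theta>2) \<in> NFS"
  shows "(A,C,restrict (\<theta>2 \<circ> \<theta>1) A) \<in> NFS"
proof -
  obtain \<psi>1 where p1: "(A <#>\<^bsub>G\<^esub> P, B <#>\<^bsub>G\<^esub> P, \<psi>1) \<in> F" "\<forall>a \<in> A. \<psi>1 a = \<theta>1 a" "\<psi>1 ` P = P"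
    using NFS_D(4)[OF assms(1)] by blast
  obtain \<psi>2 where p2: "(B <#>\<^bsub>G\<^esub> P, C <#>\<^bsub>G\<^esub> P, \<psi>2) \<in> F" "\<forall>a \<in> B. \<psi>2 a = \<theta>2 a" "\<psi>2 ` P = P"
    using NFS_D(4)[OF assms(2)] by blast
  have f1: "(A,B,\<theta>1) \<in> F" and f2: "(B,C,\<theta>2) \<in> F" using NFS_D assms by blast+
  have AN: "A \<subseteq> N" using NFS_D(2)[OF assms(1)] .
  have PA: "P \<subseteq> A <#>\<^bsub>G\<^esub> P" using AP_sg(3)[OF memF(1)[OF f1] AN] .
  have c: "(A <#>\<^bsub>G\<^esub> P, C <#>\<^bsub>G\<^esub> P, restrict (\<psi>2 \<circ> \<psi>1) (A <#>\<^bsub>G\<^esub> P)) \<in> F" using compF[OF p1(1) p2(1)] .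
  have AA: "A \<subseteq> A <#>\<^bsub>G\<^esub> P" using AP_sg(4)[OF memF(1)[OF f1] AN] .
  have ag: "\<forall>a \<in> A. restrict (\<psi>2 \<circ> \<psi>1) (A <#>\<^bsub>G\<^esub> P) a = restrict (\<theta>2 \<circ> \<theta>1) A a"
  proof
    fix a assume a: "a \<in> A"
    have "\<theta>1 a \<in> B" using memF(5)[OF f1] a by blast
    then show "restrict (\<psi>2 \<circ> \<psi>1) (A <#>\<^bsub>G\<^esub> P) a = restrict (\<theta>2 \<circ> \<theta>1) A a"
      using a AA p1(2) p2(2) by auto
  qed
  have im: "restrict (\<psi>2 \<circ> \<psi>1) (A <#>\<^bsub>G\<^esub> P) ` P = P"
  proof -
    have "restrict (\<psi>2 \<circ> \<psi>1) (A <#>\<^bsub>G\<^esub> P) ` P = \<psi>2 ` \<psi>1 ` P" using PA by (auto simp: image_iff subset_iff)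
    then show ?thesis using p1(3) p2(3) by simp
  qed
  show ?thesis using NFS_I[OF compF[OF f1 f2] AN NFS_D(3)[OF assms(2)] c ag im] .
qed

lemma NFS_inv: assumes "(A,B,\<theta>) \<in> NFS" "\<theta> ` A = B"
  shows "(B,A,restrict (inv_into A \<theta>) B) \<in> NFS"
proof -
  obtain \<psi> where p: "(A <#>\<^bsub>G\<^esub> P, B <#>\<^bsub>G\<^esub> P, \<psi>) \<in> F" "\<forall>a \<in> A. \<psi> a = \<theta> a" "\<psi> ` P = P"
    using NFS_D(4)[OF assms(1)] by blast
  have f: "(A,B,\<theta>) \<in> F" using NFS_D assms by blast
  have AN: "A \<subseteq> N" and BN: "B \<subseteq> N" using NFS_D[OF assms(1)] by blast+
  have PA: "P \<subseteq> A <#>\<^bsub>G\<^esub> P" and AA: "A \<subseteq> A <#>\<^bsub>G\<^esub> P" using AP_sg(3,4)[OF memF(1)[OF f] AN] by blast+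
  have PB: "P \<subseteq> B <#>\<^bsub>G\<^esub> P" using AP_sg(3)[OF memF(3)[OF f] BN] .
  have hom: "\<And>x y. x \<in> A <#>\<^bsub>G\<^esub> P \<Longrightarrow> y \<in> A <#>\<^bsub>G\<^esub> P \<Longrightarrow> \<psi> (x \<otimes>\<^bsub>G\<^esub> y) = \<psi> x \<otimes>\<^bsub>G\<^esub> \<psi> y"
    using memF(8)[OF p(1)] by blast
  have himg: "\<psi> ` (A <#>\<^bsub>G\<^esub> P) = B <#>\<^bsub>G\<^esub> P"
  proof
    show "\<psi> ` (A <#>\<^bsub>G\<^esub> P) \<subseteq> B <#>\<^bsub>G\<^esub> P" using memF(5)[OF p(1)] .
    show "B <#>\<^bsub>G\<^esub> P \<subseteq> \<psi> ` (A <#>\<^bsub>G\<^esub> P)"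
    proof
      fix x assume "x \<in> B <#>\<^bsub>G\<^esub> P"
      then obtain b q where bq: "b \<in> B" "q \<in> P" "x = b \<otimes>\<^bsub>G\<^esub> q" unfolding AP_mem by blast
      obtain a where a: "a \<in> A" "b = \<theta> a" using bq(1) assms(2) by blast
      obtain p' where p': "p' \<in> P" "q = \<psi> p'" using bq(2) p(3) by blast
      have m: "a \<in> A <#>\<^bsub>G\<^esub> P" "p' \<in> A <#>\<^bsub>G\<^esub> P" using a p' AA PA by blast+
      have "x = \<psi> (a \<otimes>\<^bsub>G\<^esub> p')" using hom[OF m] a p' bq(3) p(2) by simp
      moreover have "a \<otimes>\<^bsub>G\<^esub> p' \<in> A <#>\<^bsub>G\<^esub> P" unfolding AP_mem using a p' by blast
      ultimately show "x \<in> \<psi> ` (A <#>\<^bsub>G\<^esub> P)" by blast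
    qed
  qed
  let ?j = "restrict (inv_into (A <#>\<^bsub>G\<^esub> P) \<psi>) (B <#>\<^bsub>G\<^esub> P)"
  have jF: "(B <#>\<^bsub>G\<^esub> P, A <#>\<^bsub>G\<^esub> P, ?j) \<in> F" using invF[OF p(1)] himg by simp
  have injp: "inj_on \<psi> (A <#>\<^bsub>G\<^esub> P)" using memF(6)[OF p(1)] .
  have injt: "inj_on \<theta> A" using memF(6)[OF f] .
  have ag: "\<forall>b \<in> B. ?j b = restrict (inv_into A \<theta>) B b"
  proof
    fix b assume b: "b \<in> B"
    obtain a where a: "a \<in> A" "b = \<theta> a" using b assms(2) by blast
    have "b \<in> B <#>\<^bsub>G\<^esub> P" using b AP_sg(4)[OF memF(3)[OF f] BN] by blast
    moreover have "inv_into (A <#>\<^bsub>G\<^esub> P) \<psi> b = a" using a p(2) AA injp by (metis inv_into_f_f subsetD)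
    moreover have "inv_into A \<theta> b = a" using a injt by (simp add: inv_into_f_f)
    ultimately show "?j b = restrict (inv_into A \<theta>) B b" using b by simp
  qed
  have im: "?j ` P = P"
  proof -
    have "?j ` P = ?j ` (\<psi> ` P)" using p(3) by simp
    also have "\<dots> = (\<lambda>x. ?j (\<psi> x)) ` P" by (simp only: image_image)
    also have "\<dots> = (\<lambda>x. x) ` P"
    proof (rule image_cong[OF refl])
      fix x assume x: "x \<in> P"
      have "\<psi> x \<in> B <#>\<^bsub>G\<^esub> P" using x p(3) PB by blast
      then show "?j (\<psi> x) = x" using x PA injp by (simp add: inv_into_f_f subsetD)
    qed
    finally show ?thesis by simp
  qed
  have fi: "(B, A, restrict (inv_into A \<theta>) B) \<in> F" using invF[OF f] assms(2) by simp
  show ?thesis using NFS_I[OF fi BN AN jF ag im] .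
qed

lemma eqv_NFS: "eqv_ok NFS"
  unfolding eqv_ok_def
proof (intro conjI allI impI)
  fix A B C \<theta>1 \<theta>2 assume "(A, B, \<theta>1) \<in> NFS" "(B, C, \<theta>2) \<in> NFS"
  then show "(A, C, restrict (\<theta>2 \<circ> \<theta>1) A) \<in> NFS" by (rule NFS_comp)
next
  fix A B \<theta> assume "(A, B, \<theta>) \<in> NFS" "\<theta> ` A = B"
  then show "(B, A, restrict (inv_into A \<theta>) B) \<in> NFS" by (rule NFS_inv)
  show "inj_on \<theta> A" using memF(6) NFS_D(1) \<open>(A, B, \<theta>) \<in> NFS\<close> by blast
qed

lemma NFS_refl: assumes "subgroup A G" "A \<subseteq> N"
  shows "(A, A, restrict (\<lambda>x. x) A) \<in> NFS"
proof -
  have AT: "A \<subseteq> T" using assms(2) N_T by blast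
  have s: "subgroup (A <#>\<^bsub>G\<^esub> P) G" "A <#>\<^bsub>G\<^esub> P \<subseteq> T" "P \<subseteq> A <#>\<^bsub>G\<^esub> P" "A \<subseteq> A <#>\<^bsub>G\<^esub> P"
    using AP_sg[OF assms] by blast+
  have i: "(A <#>\<^bsub>G\<^esub> P, A <#>\<^bsub>G\<^esub> P, restrict (\<lambda>x. x) (A <#>\<^bsub>G\<^esub> P)) \<in> F" using idF[OF s(1) _ s(1,2)] by blast
  have "restrict (\<lambda>x. x) (A <#>\<^bsub>G\<^esub> P) ` P = P" using s(3) by (auto simp: image_iff subset_iff)
  moreover have "\<forall>a\<in>A. restrict (\<lambda>x. x) (A <#>\<^bsub>G\<^esub> P) a = restrict (\<lambda>x. x) A a" using s(4) by auto
  ultimately show ?thesis using NFS_I[OF idF[OF assms(1) _ assms(1) AT] assms(2) assms(2) i] by blast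
qed

end



lemma cyc_prev:
  fixes j k :: nat
  assumes "k \<ge> 2" "j < k"
  shows "((j + k - 1) mod k + 1) mod k = j" "(j + k - 1) mod k \<noteq> j" "(j + k - 1) mod k < k"
proof -
  show "(j + k - 1) mod k < k" using assms by simp
  show "((j + k - 1) mod k + 1) mod k = j"
  proof (cases j)
    case 0 then show ?thesis using assms by simp
  next
    case (Suc j') then have "(j + k - 1) mod k = j'" using assms
      by (metis add_Suc diff_Suc_1 less_Suc_eq mod_add_self2 mod_less order_less_trans)
    then show ?thesis using Suc assms by simp
  qed
  show "(j + k - 1) mod k \<noteq> j"
  proof (cases j)
    case 0 then show ?thesis using assms by simp
  next
    case (Suc j') then have "(j + k - 1) mod k = j'" using assms
      by (metis add_Suc diff_Suc_1 less_Suc_eq mod_add_self2 mod_less order_less_trans)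
    then show ?thesis using Suc by simp
  qed
qed

lemma cyc_two:
  assumes k: "length es = k" "length vs = k" "k \<ge> 2" "distinct es"
    and cy: "\<forall>i < k. ends (es ! i) = (vs ! i, vs ! ((i + 1) mod k)) \<or>
                       ends (es ! i) = (vs ! ((i + 1) mod k), vs ! i)"
    and v: "v \<in> set vs"
  shows "\<exists>e1 e2. e1 \<in> set es \<and> e2 \<in> set es \<and> e1 \<noteq> e2 \<and> (fst (ends e1) = v \<or> snd (ends e1) = v)
     \<and> (fst (ends e2) = v \<or> snd (ends e2) = v)"
proof -
  obtain j where j: "j < k" "v = vs ! j" using v k(2) by (metis in_set_conv_nth)
  let ?p = "(j + k - 1) mod k"
  have p: "(?p + 1) mod k = j" "?p \<noteq> j" "?p < k" using cyc_prev[OF k(3) j(1)] by blast+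
  have e1: "fst (ends (es ! j)) = v \<or> snd (ends (es ! j)) = v" using cy j by force
  have e2: "fst (ends (es ! ?p)) = v \<or> snd (ends (es ! ?p)) = v" using cy[rule_format, OF p(3)] p(1) j by force
  have ne: "es ! j \<noteq> es ! ?p" using k(1,4) j(1) p(2,3) by (simp add: nth_eq_iff_index_eq)
  show ?thesis using e1 e2 ne j(1) p(3) k(1) by (metis nth_mem)
qed

lemma cyc_end:
  assumes k: "length es = k" "length vs = k"
    and cy: "\<forall>i < k. ends (es ! i) = (vs ! i, vs ! ((i + 1) mod k)) \<or>
                       ends (es ! i) = (vs ! ((i + 1) mod k), vs ! i)"
    and e: "e \<in> set es"
  shows "fst (ends e) \<in> set vs" "snd (ends e) \<in> set vs"
proof -
  obtain i where i: "i < k" "e = es ! i" using e k(1) by (metis in_set_conv_nth)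
  have "k > 0" using i by simp
  then have "i < length vs" "(i + 1) mod k < length vs" using i k by auto
  then show "fst (ends e) \<in> set vs" "snd (ends e) \<in> set vs" using cy i by (metis fst_conv snd_conv nth_mem)+
qed

lemma graph_good:
  fixes V :: "('v + 'w) set" and E :: "'e set" and ends :: "'e \<Rightarrow> ('v + 'w) \<times> ('v + 'w)"
  assumes finE: "finite E"
    and ends_in: "\<forall>e\<in>E. (\<exists>a. fst (ends e) = Inl a) \<and> (\<exists>b. snd (ends e) = Inr b) \<and> fst (ends e) \<in> V \<and> snd (ends e) \<in> V"
    and ZE: "Z \<subseteq> E"
    and leaf: "\<forall>e\<in>Z. \<forall>e'\<in>E. snd (ends e') = snd (ends e) \<longrightarrow> e' = e"
    and center: "\<forall>e\<in>E - Z. \<forall>e'\<in>E - Z. fst (ends e) = fst (ends e') \<longrightarrow> e = e'"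
  shows "mg_acyclic V E ends" "mg_H1 V E ends = {\<lambda>_. 0 :: 'r :: comm_ring_1}"
proof -
  show "mg_acyclic V E ends"
    unfolding mg_acyclic_def
  proof
    assume "\<exists>es vs. es \<noteq> [] \<and> length vs = length es \<and> distinct es \<and> distinct vs \<and>
      set es \<subseteq> E \<and> set vs \<subseteq> V \<and>
      (\<forall>i < length es. ends (es ! i) = (vs ! i, vs ! ((i + 1) mod length es)) \<or>
                       ends (es ! i) = (vs ! ((i + 1) mod length es), vs ! i))"
    then obtain es vs where c: "es \<noteq> []" "length vs = length es" "distinct es" "set es \<subseteq> E"
      and cy: "\<forall>i < length es. ends (es ! i) = (vs ! i, vs ! ((i + 1) mod length es)) \<or>
                       ends (es ! i) = (vs ! ((i + 1) mod length es), vs ! i)" by blast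
    define k where "k = length es"
    have cyk: "\<forall>i < k. ends (es ! i) = (vs ! i, vs ! ((i + 1) mod k)) \<or>
                       ends (es ! i) = (vs ! ((i + 1) mod k), vs ! i)" using cy k_def by simp
    have k0: "k > 0" using c(1) k_def by simp
    have mixed: "fst (ends e) \<noteq> snd (ends e)" if "e \<in> E" for e
      using ends_in that by force
    show False
    proof (cases "k = 1")
      case True
      have "ends (es ! 0) = (vs ! 0, vs ! 0)" using cyk True by auto
      moreover have "es ! 0 \<in> E" using c(1,4) by (metis nth_mem length_greater_0_conv subsetD)
      ultimately show False using mixed by (metis fst_conv snd_conv)
    next
      case False
      then have k2: "k \<ge> 2" using k0 by simp
      have lenv: "length vs = k" using c(2) k_def by simp
      have other: "\<exists>e'\<in>set es. e' \<noteq> e \<and> (fst (ends e') = v \<or> snd (ends e') = v)" if "v \<in> set vs" for v e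
        using cyc_two[OF k_def[symmetric] lenv k2 c(3) cyk that] by metis
      have notZ: "e \<notin> Z" if e: "e \<in> set es" for e
      proof
        assume eZ: "e \<in> Z"
        have "snd (ends e) \<in> set vs" using cyc_end[OF k_def[symmetric] lenv cyk e] by blast
        then obtain e' where e': "e' \<in> set es" "e' \<noteq> e" "fst (ends e') = snd (ends e) \<or> snd (ends e') = snd (ends e)"
          using other by blast
        have "e' \<in> E" "e \<in> E" using e'(1) e c(4) by blast+
        then have "snd (ends e') = snd (ends e)" using e'(3) ends_in by (metis sum.distinct(1))
        then show False using leaf eZ \<open>e' \<in> E\<close> e'(2) by blast
      qed
      obtain e where e: "e \<in> set es" using c(1) by (metis last_in_set)
      have "fst (ends e) \<in> set vs" using cyc_end[OF k_def[symmetric] lenv cyk e] by blast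
      then obtain e' where e': "e' \<in> set es" "e' \<noteq> e" "fst (ends e') = fst (ends e) \<or> snd (ends e') = fst (ends e)"
        using other by blast
      have E: "e' \<in> E" "e \<in> E" using e'(1) e c(4) by blast+
      then have "fst (ends e') = fst (ends e)" using e'(3) ends_in by (metis sum.distinct(1))
      moreover have "e \<in> E - Z" "e' \<in> E - Z" using E notZ e e'(1) by blast+
      ultimately show False using center e'(2) by metis
    qed
  qed
  show "mg_H1 V E ends = {\<lambda>_. 0 :: 'r :: comm_ring_1}"
  proof
    show "{\<lambda>_. 0 :: 'r} \<subseteq> mg_H1 V E ends" unfolding mg_H1_def by simp
    show "mg_H1 V E ends \<subseteq> {\<lambda>_. 0 :: 'r}"
    proof
      fix c :: "'e \<Rightarrow> 'r" assume "c \<in> mg_H1 V E ends"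
      then have off: "\<forall>e. e \<notin> E \<longrightarrow> c e = 0"
        and eq: "\<forall>v \<in> V. (\<Sum>e \<in> {e \<in> E. snd (ends e) = v}. c e) - (\<Sum>e \<in> {e \<in> E. fst (ends e) = v}. c e) = 0"
        unfolding mg_H1_def by blast+
      have cZ: "c e = 0" if eZ: "e \<in> Z" for e
      proof -
        have eE: "e \<in> E" using eZ ZE by blast
        let ?v = "snd (ends e)"
        have vV: "?v \<in> V" using ends_in eE by blast
        have s1: "{e' \<in> E. snd (ends e') = ?v} = {e}" using leaf eZ eE by blast
        have s2: "{e' \<in> E. fst (ends e') = ?v} = {}" using ends_in eE by (metis (mono_tags, lifting) Collect_empty_eq sum.distinct(1))
        show ?thesis using eq[rule_format, OF vV] s1 s2 by simp
      qed
      have cC: "c e = 0" if eC: "e \<in> E - Z" for e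
      proof -
        have eE: "e \<in> E" using eC by blast
        let ?v = "fst (ends e)"
        have vV: "?v \<in> V" using ends_in eE by blast
        have s1: "{e' \<in> E. snd (ends e') = ?v} = {}" using ends_in eE by (metis (mono_tags, lifting) Collect_empty_eq sum.distinct(1))
        define S where "S = {e' \<in> E. fst (ends e') = ?v}"
        have fS: "finite S" using finE S_def by simp
        have eS: "e \<in> S" using eE S_def by simp
        have rest: "\<forall>e' \<in> S - {e}. c e' = 0"
        proof
          fix e' assume e': "e' \<in> S - {e}"
          show "c e' = 0"
          proof (cases "e' \<in> Z")
            case True then show ?thesis using cZ by blast
          next
            case False then have "e' \<in> E - Z" using e' S_def by blast
            then show ?thesis using center eC e' S_def by auto
          qed
        qed
        have "sum c S = c e + sum c (S - {e})" using fS eS by (simp add: sum.remove)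
        also have "sum c (S - {e}) = 0" using rest by simp
        finally have "sum c S = c e" by simp
        then show ?thesis using eq[rule_format, OF vV] s1 S_def by simp
      qed
      show "c \<in> {\<lambda>_. 0}"
      proof -
        have "\<forall>e. c e = 0" using off cZ cC by blast
        then show ?thesis by auto
      qed
    qed
  qed
qed




sublocale fus2 \<subseteq> FP: fusP G T F P by (intro fusP.intro Fs.fus_axioms fusP_axioms.intro P_sub)
sublocale fus2 \<subseteq> HP: fusP G T H P by (intro fusP.intro Hs.fus_axioms fusP_axioms.intro P_sub)

context fus2 begin

abbreviation "NN \<equiv> normalizer_in G T P"
abbreviation "NF \<equiv> normalizer_fs G T F P"
abbreviation "NH \<equiv> normalizer_fs G T H P"

lemma HomN_K: "\<phi> \<in> Hom_F F Q NN \<Longrightarrow> \<phi> \<in> Hom_F F Q T"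
  unfolding Hom_F_def using Fs.enlargeF[OF _ FP.N_T Fs.T_sub order_refl] by simp

lemma refl_NF: assumes "\<phi> \<in> Hom_F F Q NN" shows "\<phi> \<in> rep_class F NN NF Q \<phi>"
proof -
  have f: "(Q, NN, \<phi>) \<in> F" using assms unfolding Hom_F_def by simp
  have sg: "subgroup (\<phi> ` Q) G" using Fs.img_sub[OF f] by blast
  have "(\<phi> ` Q, \<phi> ` Q, restrict (\<lambda>x. x) (\<phi> ` Q)) \<in> NF"
    using FP.NFS_refl[OF sg Fs.memF(5)[OF f]] .
  moreover have "\<forall>y\<in>\<phi> ` Q. restrict (\<lambda>x. x) (\<phi> ` Q) y = y" by simp
  ultimately show ?thesis using rc_refl assms by metis
qed

lemma refl_NH: assumes "\<phi> \<in> Hom_F F Q NN" shows "\<phi> \<in> rep_class F NN NH Q \<phi>"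
proof -
  have f: "(Q, NN, \<phi>) \<in> F" using assms unfolding Hom_F_def by simp
  have sg: "subgroup (\<phi> ` Q) G" using Fs.img_sub[OF f] by blast
  have "(\<phi> ` Q, \<phi> ` Q, restrict (\<lambda>x. x) (\<phi> ` Q)) \<in> NH"
    using HP.NFS_refl[OF sg Fs.memF(5)[OF f]] .
  moreover have "\<forall>y\<in>\<phi> ` Q. restrict (\<lambda>x. x) (\<phi> ` Q) y = y" by simp
  ultimately show ?thesis using rc_refl assms by metis
qed

lemma refl_H: assumes "\<phi> \<in> Hom_F F Q T" shows "\<phi> \<in> rep_class F T H Q \<phi>"
proof -
  have f: "(Q, T, \<phi>) \<in> F" using assms unfolding Hom_F_def by simp
  have sg: "subgroup (\<phi> ` Q) G" "\<phi> ` Q \<subseteq> T" using Fs.img_sub[OF f] by blast+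
  have "(\<phi> ` Q, \<phi> ` Q, restrict (\<lambda>x. x) (\<phi> ` Q)) \<in> H"
    using Hs.idF[OF sg(1) order_refl sg] .
  moreover have "\<forall>y\<in>\<phi> ` Q. restrict (\<lambda>x. x) (\<phi> ` Q) y = y" by simp
  ultimately show ?thesis using rc_refl assms by metis
qed

lemma NH_NF: assumes "\<chi> \<in> rep_class F NN NH Q \<phi>" shows "\<chi> \<in> rep_class F NN NF Q \<phi>"
proof -
  obtain \<theta> where "(\<phi> ` Q, \<chi> ` Q, \<theta>) \<in> NH" "\<theta> ` (\<phi> ` Q) = \<chi> ` Q" "\<forall>x\<in>Q. \<theta> (\<phi> x) = \<chi> x"
    "\<chi> \<in> Hom_F F Q NN" using assms unfolding rc_mem by blast
  moreover have "NH \<subseteq> NF" using NFS_mono[OF HF] .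
  ultimately show ?thesis unfolding rc_mem by blast
qed

lemma NH_H: assumes "\<chi> \<in> rep_class F NN NH Q \<phi>" shows "\<chi> \<in> rep_class F T H Q \<phi>"
proof -
  have "\<chi> \<in> Hom_F F Q T" using assms HomN_K unfolding rc_mem by blast
  moreover have "NH \<subseteq> H" using HP.NFS_D(1) by auto
  moreover obtain \<theta> where "(\<phi> ` Q, \<chi> ` Q, \<theta>) \<in> NH" "\<theta> ` (\<phi> ` Q) = \<chi> ` Q" "\<forall>x\<in>Q. \<theta> (\<phi> x) = \<chi> x"
    using assms unfolding rc_mem by blast
  ultimately show ?thesis unfolding rc_mem by blast
qed

lemma some_cls: assumes "\<phi> \<in> Hom_F F Q NN"
  defines "e \<equiv> rep_class F NN NH Q \<phi>"
  shows "(SOME \<psi>. \<psi> \<in> e) \<in> e" "(SOME \<psi>. \<psi> \<in> e) \<in> Hom_F F Q NN"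
    "rep_class F NN NH Q (SOME \<psi>. \<psi> \<in> e) = e"
proof -
  have "\<phi> \<in> e" using refl_NH[OF assms(1)] e_def by simp
  then show 1: "(SOME \<psi>. \<psi> \<in> e) \<in> e" using someI[of "\<lambda>\<psi>. \<psi> \<in> e" \<phi>] by blast
  then show "(SOME \<psi>. \<psi> \<in> e) \<in> Hom_F F Q NN" unfolding e_def rc_mem by blast
  show "rep_class F NN NH Q (SOME \<psi>. \<psi> \<in> e) = e"
    using rc_eq[OF HP.eqv_NFS _ assms(1)] 1 e_def by blast
qed

lemma small_over: assumes "subgroup XX G" "P \<subseteq> XX" "XX \<noteq> P" shows "\<not> small XX"
proof
  assume "small XX"
  then obtain R where R: "R \<subseteq> P" "F_conjugate F XX R" unfolding small_def by blast
  have fX: "finite XX" using Fs.finA assms(1) by blast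
  have fP: "finite P" using Fs.finA P_sub(1) by blast
  have "card R \<le> card P" using R(1) fP by (simp add: card_mono)
  moreover have "card P < card XX" using assms fX by (simp add: psubset_card_mono psubset_eq)
  moreover have "card XX = card R" using Fs.Fconj_card R(2) by blast
  ultimately show False by simp
qed

lemma K1:
  assumes Q: "subgroup Q G" "Q \<subseteq> T" and nc: "\<not> (\<exists>R. R \<subset> P \<and> F_conjugate F Q R)"
    and h: "\<phi> \<in> Hom_F F Q NN" "\<phi>' \<in> Hom_F F Q NN" "\<phi> ` Q \<noteq> P" "\<phi> \<in> rep_class F NN NF Q \<phi>'"
  shows "\<phi> \<in> rep_class F NN NH Q \<phi>'"
proof -
  obtain \<theta> where t: "(\<phi>' ` Q, \<phi> ` Q, \<theta>) \<in> NF" "\<theta> ` (\<phi>' ` Q) = \<phi> ` Q" "\<forall>x\<in>Q. \<theta> (\<phi>' x) = \<phi> x"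
    using h(4) unfolding rc_mem by blast
  obtain \<psi> where p: "(\<phi>' ` Q <#>\<^bsub>G\<^esub> P, \<phi> ` Q <#>\<^bsub>G\<^esub> P, \<psi>) \<in> F" "\<forall>a \<in> \<phi>' ` Q. \<psi> a = \<theta> a" "\<psi> ` P = P"
    using FP.NFS_D(4)[OF t(1)] by blast
  have tF: "(\<phi>' ` Q, \<phi> ` Q, \<theta>) \<in> F" and N1: "\<phi>' ` Q \<subseteq> NN" and N2: "\<phi> ` Q \<subseteq> NN"
    using FP.NFS_D[OF t(1)] by blast+
  have f': "(Q, NN, \<phi>') \<in> F" using h(2) unfolding Hom_F_def by simp
  have sg1: "subgroup (\<phi>' ` Q) G" using Fs.img_sub[OF f'] by blast
  have notsub: "\<not> \<phi>' ` Q \<subseteq> P"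
  proof
    assume sub: "\<phi>' ` Q \<subseteq> P"
    show False
    proof (cases "\<phi>' ` Q = P")
      case True
      then have "\<phi> ` Q = \<psi> ` P" using t(2) p(2) by (metis image_cong)
      then show False using p(3) h(3) by simp
    next
      case False
      then have "\<phi>' ` Q \<subset> P" using sub by blast
      moreover have "F_conjugate F Q (\<phi>' ` Q)" unfolding F_conjugate_def using Fs.imgF[OF f'] by blast
      ultimately show False using nc by blast
    qed
  qed
  have X: "subgroup (\<phi>' ` Q <#>\<^bsub>G\<^esub> P) G" "P \<subseteq> \<phi>' ` Q <#>\<^bsub>G\<^esub> P" "\<phi>' ` Q \<subseteq> \<phi>' ` Q <#>\<^bsub>G\<^esub> P"
    using FP.AP_sg[OF sg1 N1] by blast+
  have "\<phi>' ` Q <#>\<^bsub>G\<^esub> P \<noteq> P" using X(3) notsub by blast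
  then have ns: "\<not> small (\<phi>' ` Q <#>\<^bsub>G\<^esub> P)" using small_over X by blast
  have pH: "(\<phi>' ` Q <#>\<^bsub>G\<^esub> P, \<phi> ` Q <#>\<^bsub>G\<^esub> P, \<psi>) \<in> H" using S1[OF p(1) ns] .
  have r: "(\<phi>' ` Q, \<phi> ` Q <#>\<^bsub>G\<^esub> P, restrict \<psi> (\<phi>' ` Q)) \<in> H" using Hs.restrF[OF pH sg1 X(3)] .
  have req: "restrict \<psi> (\<phi>' ` Q) = \<theta>"
  proof -
    have "\<theta> \<in> extensional (\<phi>' ` Q)" using Fs.memF(7)[OF tF] .
    then show ?thesis using p(2) by (auto simp: restrict_def extensional_def fun_eq_iff)
  qed
  have sg2: "subgroup (\<phi> ` Q) G" "\<phi> ` Q \<subseteq> T" using Fs.memF(3,4)[OF tF] by blast+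
  have tH: "(\<phi>' ` Q, \<phi> ` Q, \<theta>) \<in> H" using Hs.codF[OF r[unfolded req]] t(2) sg2 by blast
  have "(\<phi>' ` Q, \<phi> ` Q, \<theta>) \<in> NH" using HP.NFS_I[OF tH N1 N2 pH p(2) p(3)] .
  then show ?thesis unfolding rc_mem using h(1) t(2,3) by blast
qed

end



lemma conn_root:
  assumes r: "r \<in> V" and all: "\<forall>v\<in>V. (v, r) \<in> {(x, y). \<exists>e\<in>E. ends e = (x, y) \<or> ends e = (y, x)}\<^sup>*"
  shows "mg_connected V E ends"
  unfolding mg_connected_def
proof (intro conjI ballI)
  show "V \<noteq> {}" using r by blast
  fix u v assume u: "u \<in> V" and v: "v \<in> V"
  define R where "R = {(x, y). \<exists>e\<in>E. ends e = (x, y) \<or> ends e = (y, x)}"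
  have symR: "R\<inverse> = R" unfolding R_def by auto
  have "(v, r) \<in> R\<^sup>*" using all v R_def by blast
  then have "(r, v) \<in> (R\<inverse>)\<^sup>*" by (rule rtrancl_converseI)
  then have rv: "(r, v) \<in> R\<^sup>*" using symR by simp
  have "(u, r) \<in> R\<^sup>*" using all u R_def by blast
  then have "(u, v) \<in> R\<^sup>*" using rv by (rule rtrancl_trans)
  then show "(u, v) \<in> {(x, y). \<exists>e\<in>E. ends e = (x, y) \<or> ends e = (y, x)}\<^sup>*" using R_def by simp
qed

context fus2 begin

lemma finite_Hom: assumes "subgroup Q G" shows "finite (Hom_F F Q Y1)"
proof -
  have "Hom_F F Q Y1 \<subseteq> PiE Q (\<lambda>_. carrier G)"
  proof
    fix \<phi> assume "\<phi> \<in> Hom_F F Q Y1"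
    then have f: "(Q, Y1, \<phi>) \<in> F" unfolding Hom_F_def by simp
    have "\<phi> ` Q \<subseteq> carrier G" using Fs.memF(5)[OF f] subgroup.subset[OF Fs.memF(3)[OF f]] by blast
    then show "\<phi> \<in> PiE Q (\<lambda>_. carrier G)" using Fs.memF(7)[OF f] by (auto simp: PiE_def)
  qed
  moreover have "finite (PiE Q (\<lambda>_. carrier G))" using Fs.finA[OF assms] Fs.fin by (simp add: finite_PiE)
  ultimately show ?thesis by (rule finite_subset)
qed

lemma main_graph:
  assumes Q: "subgroup Q G" "Q \<subseteq> T" and nc: "\<not> (\<exists>R. R \<subset> P \<and> F_conjugate F Q R)"
  defines "V \<equiv> RepL_V F T H NN NF Q" and "E \<equiv> RepL_E F NN NH Q" and "ends \<equiv> RepL_ends F T H NN NF Q"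
  shows "mg_tree V E ends \<and> mg_H1 V E ends = {\<lambda>_. 0 :: 'r :: comm_ring_1}"
proof -
  define sel where "sel e = (SOME \<phi>. \<phi> \<in> e)" for e :: "('a \<Rightarrow> 'a) set"
  define clH where "clH = rep_class F T H Q"
  define clNF where "clNF = rep_class F NN NF Q"
  define clNH where "clNH = rep_class F NN NH Q"
  define HomK where "HomK = Hom_F F Q T"
  define HomN where "HomN = Hom_F F Q NN"
  have Vd: "V = Inl ` clH ` HomK \<union> Inr ` clNF ` HomN"
    unfolding V_def RepL_V_def Rep_def clH_def clNF_def HomK_def HomN_def by simp
  have Ed: "E = clNH ` HomN" unfolding E_def RepL_E_def Rep_def clNH_def HomN_def by simp
  have endsd: "ends e = (Inl (clH (sel e)), Inr (clNF (sel e)))" for e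
    unfolding ends_def RepL_ends_def sel_def clH_def clNF_def by (simp add: Let_def)
  have NK: "\<phi> \<in> HomK" if "\<phi> \<in> HomN" for \<phi> using HomN_K that HomN_def HomK_def by blast
  have selE: "sel e \<in> e \<and> sel e \<in> HomN \<and> clNH (sel e) = e" if eE: "e \<in> E" for e
  proof -
    obtain \<phi> where "\<phi> \<in> HomN" "e = clNH \<phi>" using eE Ed by blast
    then show ?thesis using some_cls[of \<phi> Q] unfolding sel_def clNH_def HomN_def by simp
  qed
  have finE: "finite E" unfolding Ed HomN_def using finite_Hom[OF Q(1)] by blast
  have eqH: "eqv_ok H" using Hs.eqv_F .
  have eqNF: "eqv_ok NF" using FP.eqv_NFS .
  have eqNH: "eqv_ok NH" using HP.eqv_NFS .
  define Z where "Z = {e \<in> E. sel e ` Q \<noteq> P}"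
  have ends_in: "\<forall>e\<in>E. (\<exists>a. fst (ends e) = Inl a) \<and> (\<exists>b. snd (ends e) = Inr b) \<and> fst (ends e) \<in> V \<and> snd (ends e) \<in> V"
  proof
    fix e assume e: "e \<in> E"
    have "sel e \<in> HomN" using selE[OF e] by blast
    then show "(\<exists>a. fst (ends e) = Inl a) \<and> (\<exists>b. snd (ends e) = Inr b) \<and> fst (ends e) \<in> V \<and> snd (ends e) \<in> V"
      unfolding endsd Vd using NK by auto
  qed
  have leaf: "\<forall>e\<in>Z. \<forall>e'\<in>E. snd (ends e') = snd (ends e) \<longrightarrow> e' = e"
  proof (intro ballI impI)
    fix e e' assume eZ: "e \<in> Z" and e': "e' \<in> E" and sn: "snd (ends e') = snd (ends e)"
    have e: "e \<in> E" "sel e ` Q \<noteq> P" using eZ Z_def by blast+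
    have s: "sel e \<in> HomN" "clNH (sel e) = e" "sel e' \<in> HomN" "clNH (sel e') = e'"
      using selE[OF e(1)] selE[OF e'] by blast+
    have "clNF (sel e') = clNF (sel e)" using sn endsd by simp
    moreover have "sel e \<in> clNF (sel e)" using refl_NF s(1) clNF_def HomN_def by blast
    ultimately have "sel e \<in> clNF (sel e')" by simp
    then have "sel e \<in> clNH (sel e')"
      using K1[OF Q nc] s(1,3) e(2) unfolding clNF_def clNH_def HomN_def by blast
    then have "clNH (sel e) = clNH (sel e')" using rc_eq[OF eqNH] s(3) unfolding clNH_def HomN_def by blast
    then show "e' = e" using s by simp
  qed
  have center: "\<forall>e\<in>E - Z. \<forall>e'\<in>E - Z. fst (ends e) = fst (ends e') \<longrightarrow> e = e'"
  proof (intro ballI impI)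
    fix e e' assume eZ: "e \<in> E - Z" and e'Z: "e' \<in> E - Z" and fs: "fst (ends e) = fst (ends e')"
    have e: "e \<in> E" "sel e ` Q = P" using eZ Z_def by blast+
    have e': "e' \<in> E" "sel e' ` Q = P" using e'Z Z_def by blast+
    have s: "sel e \<in> HomN" "clNH (sel e) = e" "sel e' \<in> HomN" "clNH (sel e') = e'"
      using selE[OF e(1)] selE[OF e'(1)] by blast+
    have "clH (sel e) = clH (sel e')" using fs endsd by simp
    moreover have "sel e' \<in> clH (sel e')" using refl_H NK s(3) clH_def HomK_def by blast
    ultimately have "sel e' \<in> clH (sel e)" by simp
    then obtain \<theta> where t: "(P, P, \<theta>) \<in> H" "\<theta> ` P = P" "\<forall>x\<in>Q. \<theta> (sel e x) = sel e' x"
      unfolding clH_def rc_mem using e(2) e'(2) by auto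
    have tNH: "(P, P, \<theta>) \<in> NH"
      using HP.NFS_I[OF t(1) FP.P_N FP.P_N _ _ t(2)] t(1) FP.PP by simp
    have "sel e' \<in> clNH (sel e)" unfolding clNH_def rc_mem
      using s(3) tNH t(2,3) e(2) e'(2) HomN_def by auto
    then have "clNH (sel e') = clNH (sel e)" using rc_eq[OF eqNH] s(1) unfolding clNH_def HomN_def by blast
    then show "e = e'" using s by simp
  qed
  have ZE: "Z \<subseteq> E" unfolding Z_def by blast
  have good: "mg_acyclic V E ends" "mg_H1 V E ends = {\<lambda>_. 0 :: 'r :: comm_ring_1}"
    using graph_good[OF finE ends_in ZE leaf center] by blast+
  define R where "R = {(x, y). \<exists>e\<in>E. ends e = (x, y) \<or> ends e = (y, x)}"
  have edgeR: "(fst (ends e), snd (ends e)) \<in> R" "(snd (ends e), fst (ends e)) \<in> R" if "e \<in> E" for e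
    using that unfolding R_def by auto
  have inr_step: "(Inr (clNF \<phi>), Inl (clH (sel (clNH \<phi>)))) \<in> R \<and> sel (clNH \<phi>) \<in> HomK" if \<phi>: "\<phi> \<in> HomN" for \<phi>
  proof -
    have e: "clNH \<phi> \<in> E" using Ed \<phi> by blast
    have s: "sel (clNH \<phi>) \<in> clNH \<phi>" "sel (clNH \<phi>) \<in> HomN" using selE[OF e] by blast+
    have "sel (clNH \<phi>) \<in> clNF \<phi>" using NH_NF s(1) unfolding clNH_def clNF_def by blast
    then have "clNF (sel (clNH \<phi>)) = clNF \<phi>" using rc_eq[OF eqNF] \<phi> unfolding clNF_def HomN_def by blast
    then show ?thesis using edgeR(2)[OF e] endsd NK[OF s(2)] by simp
  qed
  obtain r where r: "r \<in> V" "\<forall>\<phi>\<in>HomK. (Inl (clH \<phi>), r) \<in> R\<^sup>*"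
  proof (cases "small Q")
    case False
    define \<iota> where "\<iota> = restrict (\<lambda>x. x) Q"
    have iF: "(Q, T, \<iota>) \<in> F" using Fs.idF[OF Q(1) Q(2) Fs.T_sub order_refl] \<iota>_def by simp
    have iK: "\<iota> \<in> HomK" using iF by (simp add: HomK_def Hom_F_def)
    have iQ: "\<iota> ` Q = Q" using \<iota>_def by simp
    have "(Inl (clH \<phi>), Inl (clH \<iota>)) \<in> R\<^sup>*" if \<phi>: "\<phi> \<in> HomK" for \<phi>
    proof -
      have f: "(Q, T, \<phi>) \<in> F" using \<phi> by (simp add: HomK_def Hom_F_def)
      have "(Q, \<phi> ` Q, \<phi>) \<in> H" using Hs.imgF[OF S1[OF f False]] .
      then have "\<phi> \<in> clH \<iota>" unfolding clH_def rc_mem using iQ \<phi> HomK_def \<iota>_def by auto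
      then have "clH \<phi> = clH \<iota>" using rc_eq[OF eqH] iK unfolding clH_def HomK_def by blast
      then show ?thesis by simp
    qed
    moreover have "Inl (clH \<iota>) \<in> V" using Vd iK by blast
    ultimately show ?thesis using that by blast
  next
    case True
    then obtain R0 where "R0 \<subseteq> P" "F_conjugate F Q R0" unfolding small_def by blast
    then have "F_conjugate F Q P" using nc by blast
    then have hc: "F_conjugate H Q P" using S3 by blast
    then obtain k where k: "(Q, P, k) \<in> H" "k ` Q = P" unfolding F_conjugate_def by blast
    have kN: "(Q, NN, k) \<in> F" using Fs.enlargeF[OF _ FP.P_N FP.N_sg FP.N_T] k(1) HF by blast
    have kH: "k \<in> HomN" using kN by (simp add: HomN_def Hom_F_def)
    have "(Inl (clH \<phi>), Inr (clNF k)) \<in> R" if \<phi>: "\<phi> \<in> HomK" for \<phi>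
    proof -
      have f: "(Q, T, \<phi>) \<in> F" using \<phi> by (simp add: HomK_def Hom_F_def)
      have "F_conjugate H (\<phi> ` Q) P" using S2[OF f] hc by blast
      then obtain g where g: "(\<phi> ` Q, P, g) \<in> H" "g ` (\<phi> ` Q) = P" unfolding F_conjugate_def by blast
      define \<chi> where "\<chi> = restrict (g \<circ> \<phi>) Q"
      have cF: "(Q, P, \<chi>) \<in> F" using Fs.compF[OF Fs.imgF[OF f]] g(1) HF \<chi>_def by blast
      have cQ: "\<chi> ` Q = P" using g(2) \<chi>_def by (auto simp: image_iff)
      have cN: "(Q, NN, \<chi>) \<in> F" using Fs.enlargeF[OF cF FP.P_N FP.N_sg FP.N_T] .
      have cH: "\<chi> \<in> HomN" using cN by (simp add: HomN_def Hom_F_def)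
      have e: "clNH \<chi> \<in> E" using Ed cH by blast
      have s: "sel (clNH \<chi>) \<in> clNH \<chi>" using selE[OF e] by blast
      have "\<chi> \<in> clH \<phi>" unfolding clH_def rc_mem using g cQ NK[OF cH] \<chi>_def HomK_def by auto
      then have h1: "clH \<chi> = clH \<phi>" using rc_eq[OF eqH] \<phi> unfolding clH_def HomK_def by blast
      have "sel (clNH \<chi>) \<in> clH \<chi>" using NH_H s unfolding clNH_def clH_def by blast
      then have h2: "clH (sel (clNH \<chi>)) = clH \<chi>" using rc_eq[OF eqH] NK[OF cH] unfolding clH_def HomK_def by blast
      define \<theta> where "\<theta> = restrict (k \<circ> restrict (inv_into Q \<chi>) P) P"
      have iF: "(P, Q, restrict (inv_into Q \<chi>) P) \<in> F" using Fs.invF[OF cF] cQ by simp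
      have tF: "(P, P, \<theta>) \<in> F" using Fs.compF[OF iF] k(1) HF \<theta>_def by blast
      have tP: "\<theta> ` P = P" using Fs.auto_img[OF tF] .
      have injc: "inj_on \<chi> Q" using Fs.memF(6)[OF cF] .
      have tv: "\<forall>x\<in>Q. \<theta> (\<chi> x) = k x"
      proof
        fix x assume x: "x \<in> Q"
        have "\<chi> x \<in> P" using x cQ by blast
        then show "\<theta> (\<chi> x) = k x" using x injc \<theta>_def by (simp add: inv_into_f_f)
      qed
      have tNF: "(P, P, \<theta>) \<in> NF"
        using FP.NFS_I[OF tF FP.P_N FP.P_N _ _ tP] tF FP.PP by simp
      have "k \<in> clNF \<chi>" unfolding clNF_def rc_mem using kH tNF tP tv cQ k(2) HomN_def by auto
      then have h3: "clNF k = clNF \<chi>" using rc_eq[OF eqNF] cH unfolding clNF_def HomN_def by blast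
      have "sel (clNH \<chi>) \<in> clNF \<chi>" using NH_NF s unfolding clNH_def clNF_def by blast
      then have h4: "clNF (sel (clNH \<chi>)) = clNF \<chi>" using rc_eq[OF eqNF] cH unfolding clNF_def HomN_def by blast
      have "ends (clNH \<chi>) = (Inl (clH \<phi>), Inr (clNF k))" using endsd h1 h2 h3 h4 by simp
      then show ?thesis using edgeR(1)[OF e] by simp
    qed
    moreover have "Inr (clNF k) \<in> V" using Vd kH by blast
    ultimately show ?thesis using that by blast
  qed
  have allv: "\<forall>v\<in>V. (v, r) \<in> R\<^sup>*"
  proof
    fix v assume "v \<in> V"
    then consider \<phi> where "\<phi> \<in> HomK" "v = Inl (clH \<phi>)" | \<phi> where "\<phi> \<in> HomN" "v = Inr (clNF \<phi>)"
      using Vd by blast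
    then show "(v, r) \<in> R\<^sup>*"
    proof cases
      case 1 then show ?thesis using r(2) by blast
    next
      case 2
      have "(v, Inl (clH (sel (clNH \<phi>)))) \<in> R" "sel (clNH \<phi>) \<in> HomK" using inr_step[OF 2(1)] 2(2) by blast+
      then show ?thesis using r(2) by (meson converse_rtrancl_into_rtrancl)
    qed
  qed
  have "mg_connected V E ends" using conn_root[OF r(1)] allv R_def by blast
  then show ?thesis using good unfolding mg_tree_def by blast
qed

end

theorem corollary4p3:
  fixes S :: "('a, 'b) monoid_scheme" and p n :: nat
    and F H :: "'a fmor set" and C :: "'a set set" and P :: "'a set"
  assumes "group S" and "finite (carrier S)" and "Factorial_Ring.prime p" and "card (carrier S) = p ^ n"
    and "saturated S (carrier S) p F" and "saturated S (carrier S) p H" and "H \<subseteq> F"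
    and C_sub: "\<forall>Q \<in> C. subgroup Q S"
    and C_conj: "\<forall>Q \<in> C. \<forall>B. F_conjugate F Q B \<longrightarrow> B \<in> C"
    and C_over: "\<forall>Q \<in> C. \<forall>R. subgroup R S \<and> Q \<subseteq> R \<longrightarrow> R \<in> C"
    and "P \<in> C" and "fully_normalized S (carrier S) F P"
    and gen: "F = generated_fs S (carrier S) (H \<union> {(P, P, \<alpha>) | \<alpha>. \<alpha> \<in> Aut_F F P})"
  defines "V \<equiv> RepL_V F (carrier S) H (normalizer_in S (carrier S) P) (normalizer_fs S (carrier S) F P)"
    and "E \<equiv> RepL_E F (normalizer_in S (carrier S) P) (normalizer_fs S (carrier S) H P)"
    and "ends \<equiv> RepL_ends F (carrier S) H (normalizer_in S (carrier S) P) (normalizer_fs S (carrier S) F P)"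
  shows "(\<forall>Q. subgroup Q S \<and> \<not> (\<exists>R. R \<subset> P \<and> F_conjugate F Q R)
            \<longrightarrow> mg_tree (V Q) (E Q) (ends Q))
       \<and> (\<forall>Q. subgroup Q S \<and> \<not> (\<exists>R. R \<subset> P \<and> F_conjugate F Q R)
            \<longrightarrow> mg_H1 (V Q) (E Q) (ends Q) = {\<lambda>_. 0 :: 'r :: comm_ring_1})
       \<and> ((\<forall>R \<in> C. \<not> R \<subset> P) \<longrightarrow>
            (\<forall>Q \<in> C. mg_H1 (V Q) (E Q) (ends Q) = {\<lambda>_. 0 :: 'r :: comm_ring_1}))"
  proof -
  have fsF: "fusion_system S (carrier S) F" using assms(5) unfolding saturated_def by blast
  have fsH: "fusion_system S (carrier S) H" using assms(6) unfolding saturated_def by blast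
  have Psg: "subgroup P S" using C_sub \<open>P \<in> C\<close> by blast
  have PT: "P \<subseteq> carrier S" using subgroup.subset[OF Psg] .
  interpret M: fus2 S "carrier S" F H P
    by (intro fus2.intro fus.intro fus2_axioms.intro assms(1,2,7) fsF fsH Psg PT gen)
  have A: "mg_tree (V Q) (E Q) (ends Q) \<and> mg_H1 (V Q) (E Q) (ends Q) = {\<lambda>_. 0 :: 'r :: comm_ring_1}"
    if Q: "subgroup Q S" "\<not> (\<exists>R. R \<subset> P \<and> F_conjugate F Q R)" for Q
    using M.main_graph[OF Q(1) subgroup.subset[OF Q(1)] Q(2)] unfolding V_def E_def ends_def by blast
  show ?thesis
  proof (intro conjI allI impI ballI)
    fix Q assume "subgroup Q S \<and> \<not> (\<exists>R. R \<subset> P \<and> F_conjugate F Q R)"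
    then show "mg_tree (V Q) (E Q) (ends Q)" using A by blast
  next
    fix Q assume "subgroup Q S \<and> \<not> (\<exists>R. R \<subset> P \<and> F_conjugate F Q R)"
    then show "mg_H1 (V Q) (E Q) (ends Q) = {\<lambda>_. 0 :: 'r :: comm_ring_1}" using A by blast
  next
    fix Q assume min: "\<forall>R\<in>C. \<not> R \<subset> P" and QC: "Q \<in> C"
    have "subgroup Q S" using C_sub QC by blast
    moreover have "\<not> (\<exists>R. R \<subset> P \<and> F_conjugate F Q R)" using C_conj QC min by blast
    ultimately show "mg_H1 (V Q) (E Q) (ends Q) = {\<lambda>_. 0 :: 'r :: comm_ring_1}" using A by blast
  qed
qed

end
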